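(* Let $m\in\mathbb{N}$, $p\in[1,\infty)$, $\mathcal{Y}=\mathbb{R}^m$ with the metric induced by a norm $\|\cdot\|$, let $\mu\in\mathcal{P}_p(\mathbb{R}^m)$ with $i$-th marginal $\mu_i\in\mathcal{P}_p(\mathbb{R})$, $i=1,\ldots,m$. Let $\beta>0$; for $i=1,\ldots,m$ let $n_i\in\mathbb{N}$, $\underline{\kappa}_i\in\mathbb{R}$ and $\kappa_{i,j}:=\underline{\kappa}_i+j\beta$, $j=0,\ldots,n_i$. Let $$\mathcal{G}_0:=\Big\{(x_1,\ldots,x_m)^\top\mapsto\Big(\max_{i\in L}\{(x_i-\kappa_{i,j_i})^+\}\Big)^+:\ L\subseteq\{1,\ldots,m\},\ 0\le j_i\le n_i\ \forall i\in L\Big\},$$ and let $\mathcal{G}:=\mathcal{G}_0\cup\{\boldsymbol{x}\mapsto x_i:1\le i\le m\}$ if $p=1$, and $\mathcal{G}:=\mathcal{G}_0\cup\{\boldsymbol{x}\mapsto((\kappa_{i,0}-x_i)^+)^p:1\le i\le m\}\cup\{\boldsymbol{x}\mapsto((x_i-\kappa_{i,n_i})^+)^p:1\le i\le m\}$ if $p>1$. Let $C_{\|\cdot\|}\ge1$ be a constant with $\|\boldsymbol{x}\|\le C_{\|\cdot\|}\|\boldsymbol{x}\|_p$ for all $\boldsymbol{x}\in\mathbb{R}^m$. Then $$\overline{W}_{p,\mu}([\mu]_{\mathcal{G}})\le2C_{\|\cdot\|}m^{1/p}\beta+2C_{\|\cdot\|}\Big(\sum_{i=1}^m\int_{\mathbb{R}}\big((\kappa_{i,0}-x_i)^+\big)^p+\big((x_i-\kappa_{i,n_i})^+\big)^p\,\mu_i(\mathrm{d}x_i)\Big)^{1/p}.$$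 In particular, for any $\epsilon>0$ there exist $\beta>0$, $(n_i)_{i=1}^m\subset\mathbb{N}$ and $(\underline{\kappa}_i)_{i=1}^m\subset\mathbb{R}$ such that $\overline{W}_{p,\mu}([\mu]_{\mathcal{G}})\le\epsilon$.
   Context: Convention: for $L=\emptyset$ the maximum over the empty index set is $-\infty$, so the corresponding function in $\mathcal{G}_0$ is identically $0$. $\mathcal{P}_p(\mathcal{Y})$ is the set of Borel probability measures with finite $p$-th moment and $W_p$ the Wasserstein distance of order $p$ w.r.t. $\|\cdot\|$. $\mathcal{P}_p(\mathcal{Y};\mathcal{G}):=\{\nu\in\mathcal{P}_p(\mathcal{Y}):\mathcal{G}\subseteq\mathcal{L}^p(\mathcal{Y},\nu)\}$; for $\mu\in\mathcal{P}_p(\mathcal{Y};\mathcal{G})$, $[\mu]_{\mathcal{G}}:=\{\nu\in\mathcal{P}_p(\mathcal{Y};\mathcal{G}):\int g\,\mathrm{d}\nu=\int g\,\mathrm{d}\mu\ \forall g\in\mathcal{G}\}$ and $\overline{W}_{p,\mu}([\mu]_{\mathcal{G}}):=\sup_{\nu\in[\mu]_{\mathcal{G}}}W_p(\mu,\nu)$. *)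

theory Defs
  imports "HOL-Probability.Probability"
begin

definition is_norm :: "('a::real_vector \<Rightarrow> real) \<Rightarrow> bool" where
  "is_norm N \<longleftrightarrow> (\<forall>x. 0 \<le> N x) \<and> (\<forall>x. N x = 0 \<longleftrightarrow> x = 0)
     \<and> (\<forall>c x. N (scaleR c x) = \<bar>c\<bar> * N x) \<and> (\<forall>x y. N (x + y) \<le> N x + N y)"

definition Pp :: "('a::euclidean_space \<Rightarrow> real) \<Rightarrow> real \<Rightarrow> 'a measure set" where
  "Pp N p = {\<nu>. prob_space \<nu> \<and> sets \<nu> = sets borel \<and> integrable \<nu> (\<lambda>x. N x powr p)}"

definition couplings :: "'a::euclidean_space measure \<Rightarrow> 'a measure \<Rightarrow> ('a \<times> 'a) measure set" where
  "couplings \<mu> \<nu> = {\<pi>. prob_space \<pi> \<and> sets \<pi> = sets (borel \<Otimes>\<^sub>M borel)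
      \<and> distr \<pi> borel fst = \<mu> \<and> distr \<pi> borel snd = \<nu>}"

definition Wp :: "('a::euclidean_space \<Rightarrow> real) \<Rightarrow> real \<Rightarrow> 'a measure \<Rightarrow> 'a measure \<Rightarrow> real" where
  "Wp N p \<mu> \<nu> = enn2real (INF \<pi>\<in>couplings \<mu> \<nu>.
       \<integral>\<^sup>+ z. ennreal (N (fst z - snd z) powr p) \<partial>\<pi>) powr (1 / p)"

definition PpG :: "('a::euclidean_space \<Rightarrow> real) \<Rightarrow> real \<Rightarrow> ('a \<Rightarrow> real) set \<Rightarrow> 'a measure set" where
  "PpG N p G = {\<nu> \<in> Pp N p. \<forall>g\<in>G. g \<in> borel_measurable borel \<and> integrable \<nu> (\<lambda>x. \<bar>g x\<bar> powr p)}"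

definition eq_class :: "('a::euclidean_space \<Rightarrow> real) \<Rightarrow> real \<Rightarrow> ('a \<Rightarrow> real) set \<Rightarrow> 'a measure \<Rightarrow> 'a measure set" where
  "eq_class N p G \<mu> = {\<nu> \<in> PpG N p G. \<forall>g\<in>G. (\<integral>x. g x \<partial>\<nu>) = (\<integral>x. g x \<partial>\<mu>)}"

definition Wbar :: "('a::euclidean_space \<Rightarrow> real) \<Rightarrow> real \<Rightarrow> ('a \<Rightarrow> real) set \<Rightarrow> 'a measure \<Rightarrow> ennreal" where
  "Wbar N p G \<mu> = (SUP \<nu>\<in>eq_class N p G \<mu>. ennreal (Wp N p \<mu> \<nu>))"

definition kappa :: "('m \<Rightarrow> real) \<Rightarrow> real \<Rightarrow> 'm \<Rightarrow> nat \<Rightarrow> real" where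
  "kappa kl \<beta> i j = kl i + real j * \<beta>"

definition G0 :: "('m::finite \<Rightarrow> real) \<Rightarrow> real \<Rightarrow> ('m \<Rightarrow> nat) \<Rightarrow> (real^'m \<Rightarrow> real) set" where
  "G0 kl \<beta> n = {(\<lambda>x. if L = {} then 0
        else max 0 (MAX i\<in>L. max 0 (x $ i - kappa kl \<beta> i (j i))))
      | L j. \<forall>i\<in>L. j i \<le> n i}"

definition Gfam :: "real \<Rightarrow> ('m::finite \<Rightarrow> real) \<Rightarrow> real \<Rightarrow> ('m \<Rightarrow> nat) \<Rightarrow> (real^'m \<Rightarrow> real) set" where
  "Gfam p kl \<beta> n =
     (if p = 1 then G0 kl \<beta> n \<union> {(\<lambda>x. x $ i) | i. True}
      else G0 kl \<beta> n
        \<union> {(\<lambda>x. (max 0 (kappa kl \<beta> i 0 - x $ i)) powr p) | i. True}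
        \<union> {(\<lambda>x. (max 0 (x $ i - kappa kl \<beta> i (n i))) powr p) | i. True})"

end

theory Submission
  imports Defs
begin

lemma conv2:
  fixes a b l p :: real
  assumes "0 \<le> a" "0 \<le> b" "0 < l" "l < 1" "1 \<le> p"
  shows "(a + b) powr p \<le> l powr (1 - p) * a powr p + (1 - l) powr (1 - p) * b powr p"
proof (cases "a = 0 \<or> b = 0")
  case True
  have l1: "1 \<le> l powr (1 - p)" using assms by (smt (verit) powr01_less_one)
  have l2: "1 \<le> (1 - l) powr (1 - p)" using assms by (smt (verit) powr01_less_one)
  have "0 \<le> a powr p" "0 \<le> b powr p" by auto
  then show ?thesis using True l1 l2 
    by (smt (verit, ccfv_SIG) mult_le_cancel_right1 powr_0 powr_gt_zero)
next
  case False
  then have ab: "0 < a" "0 < b" using assms by auto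
  have "(l * (a / l) + (1 - l) * (b / (1 - l))) powr p \<le> l * (a / l) powr p + (1 - l) * (b / (1 - l)) powr p"
    using convex_onD[OF powr_convex[OF assms(5)], of "1 - l" "a/l" "b/(1-l)"] ab assms by auto
  moreover have "l * (a / l) powr p = l powr (1 - p) * a powr p"
    using assms ab by (simp add: powr_divide powr_diff divide_simps) 
  moreover have "(1 - l) * (b / (1 - l)) powr p = (1 - l) powr (1 - p) * b powr p"
    using assms ab by (simp add: powr_divide powr_diff divide_simps)
  ultimately show ?thesis using assms by simp
qed

lemma mink_aux:
  fixes s t p :: real
  assumes "0 < s" "0 < t" "1 \<le> p"
  shows "(s / (s + t)) powr (1 - p) * s powr p + (1 - s / (s + t)) powr (1 - p) * t powr p = (s + t) powr p"
proof -
  have e1: "1 - s / (s + t) = t / (s + t)" using assms by (simp add: field_simps)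
  have "(s / (s + t)) powr (1 - p) * s powr p = s * (s + t) powr (p - 1)"
    using assms by (simp add: powr_divide powr_diff powr_add divide_simps powr_minus)
  moreover have "(t / (s + t)) powr (1 - p) * t powr p = t * (s + t) powr (p - 1)"
    using assms by (simp add: powr_divide powr_diff powr_add divide_simps powr_minus)
  moreover have "s * (s + t) powr (p - 1) + t * (s + t) powr (p - 1) = (s + t) powr p"
  proof -
    have "s * (s + t) powr (p - 1) + t * (s + t) powr (p - 1) = (s + t) * (s + t) powr (p - 1)"
      by (simp add: distrib_right)
    also have "\<dots> = (s + t) powr p" using assms by (simp add: powr_diff)
    finally show ?thesis .
  qed
  ultimately show ?thesis using e1 by simp
qed

lemma mink2:
  fixes X A B p :: real
  assumes "0 \<le> X" "0 \<le> A" "0 \<le> B" "1 \<le> p"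
    and H: "\<And>l. 0 < l \<Longrightarrow> l < 1 \<Longrightarrow> X \<le> l powr (1 - p) * A + (1 - l) powr (1 - p) * B"
  shows "X powr (1 / p) \<le> A powr (1 / p) + B powr (1 / p)"
proof -
  have p0: "0 < p" using assms by auto
  have key: "X powr (1 / p) \<le> (A + e) powr (1 / p) + (B + e) powr (1 / p)" if e: "0 < e" for e
  proof -
    define s where "s = (A + e) powr (1 / p)"
    define t where "t = (B + e) powr (1 / p)"
    have s0: "0 < s" "0 < t" using e assms by (auto simp: s_def t_def)
    have sp: "s powr p = A + e" "t powr p = B + e" using e assms p0
      by (auto simp: s_def t_def powr_powr)
    define l where "l = s / (s + t)"
    have l: "0 < l" "l < 1" using s0 by (auto simp: l_def)
    have "X \<le> l powr (1 - p) * A + (1 - l) powr (1 - p) * B" using H l by auto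
    also have "\<dots> \<le> l powr (1 - p) * (A + e) + (1 - l) powr (1 - p) * (B + e)"
      using e by (intro add_mono mult_left_mono) auto
    also have "\<dots> = (s + t) powr p" using mink_aux[OF s0 assms(4)] sp by (simp add: l_def)
    finally have "X \<le> (s + t) powr p" .
    then have "X powr (1 / p) \<le> ((s + t) powr p) powr (1 / p)"
      using assms p0 by (intro powr_mono2) auto
    also have "\<dots> = s + t" using s0 p0 by (simp add: powr_powr)
    finally show ?thesis by (simp add: s_def t_def)
  qed
  have lim: "((\<lambda>e. (A + e) powr (1 / p) + (B + e) powr (1 / p)) \<longlongrightarrow> (A + 0) powr (1 / p) + (B + 0) powr (1 / p)) (at_right 0)"
    using p0 assms
    by (intro tendsto_intros) (auto simp: eventually_at_right_less eventually_at_filter intro!: eventually_mono[OF eventually_at_right_less])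
  show ?thesis
    using tendsto_lowerbound[OF lim] key
    by (simp add: eventually_at_right_less eventually_at_filter)
qed

lemma isnormD:
  assumes "is_norm N"
  shows "\<And>x. 0 \<le> N x" "\<And>x. N x = 0 \<longleftrightarrow> x = 0" "\<And>c x. N (c *\<^sub>R x) = \<bar>c\<bar> * N x"
    "\<And>x y. N (x + y) \<le> N x + N y"
  using assms unfolding is_norm_def by auto

lemma isnorm_minus:
  assumes "is_norm N" shows "N (- x) = N x"
  using isnormD(3)[OF assms, of "-1" x] by simp

lemma isnorm_diff:
  assumes "is_norm N" shows "\<bar>N x - N y\<bar> \<le> N (x - y)"
proof -
  have "N x \<le> N (x - y) + N y" using isnormD(4)[OF assms, of "x - y" y] by simp
  moreover have "N y \<le> N (y - x) + N x" using isnormD(4)[OF assms, of "y - x" x] by simp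
  moreover have "N (y - x) = N (x - y)" using isnorm_minus[OF assms, of "x - y"] by simp
  ultimately show ?thesis by linarith
qed

lemma pnorm_le_norm:
  fixes z :: "real^'m" and p :: real
  assumes "1 \<le> p"
  shows "(\<Sum>i\<in>UNIV. \<bar>z $ i\<bar> powr p) powr (1 / p) \<le> real CARD('m) powr (1 / p) * norm z"
proof -
  have "(\<Sum>i\<in>UNIV. \<bar>z $ i\<bar> powr p) \<le> (\<Sum>i\<in>(UNIV::'m set). norm z powr p)"
    using assms by (intro sum_mono powr_mono2) (auto simp: component_le_norm_cart)
  also have "\<dots> = real CARD('m) * norm z powr p" by simp
  finally have "(\<Sum>i\<in>UNIV. \<bar>z $ i\<bar> powr p) powr (1 / p) \<le> (real CARD('m) * norm z powr p) powr (1 / p)"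
    using assms by (intro powr_mono2) (auto intro: sum_nonneg)
  also have "\<dots> = real CARD('m) powr (1 / p) * norm z"
    using assms by (simp add: powr_mult powr_powr)
  finally show ?thesis .
qed

lemma norm_lower:
  fixes N :: "real^'m \<Rightarrow> real"
  assumes "is_norm N" "1 \<le> p" "\<forall>x. N x \<le> C * (\<Sum>i\<in>UNIV. \<bar>x $ i\<bar> powr p) powr (1 / p)"
  shows "\<exists>c>0. \<forall>x. norm x \<le> c * N x"
proof -
  define K where "K = max 0 C * real CARD('m) powr (1 / p)"
  have K0: "0 \<le> K" by (simp add: K_def)
  have NK: "N z \<le> K * norm z" for z
  proof -
    have "N z \<le> C * (\<Sum>i\<in>UNIV. \<bar>z $ i\<bar> powr p) powr (1 / p)" using assms(3) by auto
    also have "\<dots> \<le> max 0 C * (\<Sum>i\<in>UNIV. \<bar>z $ i\<bar> powr p) powr (1 / p)"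
      by (intro mult_right_mono) auto
    also have "\<dots> \<le> max 0 C * (real CARD('m) powr (1 / p) * norm z)"
      by (intro mult_left_mono pnorm_le_norm assms(2)) auto
    finally show ?thesis by (simp add: K_def)
  qed
  have "K-lipschitz_on UNIV N"
  proof (rule lipschitz_onI)
    fix x y :: "real^'m"
    have "dist (N x) (N y) \<le> N (x - y)" using isnorm_diff[OF assms(1)] by (simp add: dist_real_def)
    also have "\<dots> \<le> K * dist x y" using NK by (simp add: dist_norm)
    finally show "dist (N x) (N y) \<le> K * dist x y" .
  qed (rule K0)
  then have cont: "continuous_on (sphere 0 1) N"
    using lipschitz_on_continuous_on continuous_on_subset by blast
  obtain v :: "real^'m" where "norm v = 1" using vector_choose_size[of 1] by auto
  then have ne: "sphere (0::real^'m) 1 \<noteq> {}" by auto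
  obtain x0 where x0: "x0 \<in> sphere 0 1" "\<forall>y\<in>sphere 0 1. N x0 \<le> N y"
    using continuous_attains_inf[OF compact_sphere ne cont] by blast
  have c0: "0 < N x0"
    using x0(1) isnormD(1,2)[OF assms(1)] by (metis less_eq_real_def norm_zero mem_sphere_0 zero_neq_one)
  have "norm x \<le> (1 / N x0) * N x" for x
  proof (cases "x = 0")
    case True then show ?thesis using isnormD(2)[OF assms(1), of 0] by simp
  next
    case False
    then have "(1 / norm x) *\<^sub>R x \<in> sphere 0 1" by simp
    then have "N x0 \<le> N ((1 / norm x) *\<^sub>R x)" using x0 by blast
    also have "\<dots> = N x / norm x" using isnormD(3)[OF assms(1)] by simp
    finally have "N x0 * norm x \<le> N x" using False by (simp add: field_simps)
    then show ?thesis using c0 by (simp add: field_simps)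
  qed
  then show ?thesis using c0 by (intro exI[of _ "1 / N x0"]) auto
qed

lemma measure_lborel_Ioc': "measure lborel {a<..b::real} = max 0 (b - a)"
proof (cases "a \<le> b")
  case True then show ?thesis by (simp add: measure_def)
next
  case False then show ?thesis by simp
qed

definition clamp :: "real \<Rightarrow> real" where "clamp s = min 1 (max 0 s)"

lemma clamp_mono: "s \<le> t \<Longrightarrow> clamp s \<le> clamp t" by (simp add: clamp_def)
lemma clamp_bounds: "0 \<le> clamp s" "clamp s \<le> 1" by (auto simp: clamp_def)

locale gridsetup =
  fixes kl :: "'m::finite \<Rightarrow> real" and \<beta> :: real and n :: "'m \<Rightarrow> nat"
  assumes beta_pos: "0 < \<beta>"
begin

definition Gc :: "'m \<Rightarrow> real \<Rightarrow> nat \<Rightarrow> real" where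
  "Gc i t j = (if n i \<le> j then 1 else 1 - clamp ((t - kappa kl \<beta> i j) / \<beta>))"

definition lo :: "('m \<Rightarrow> nat) \<Rightarrow> 'm \<Rightarrow> real \<Rightarrow> real" where
  "lo r i t = (if r i = 0 then 0 else Gc i t (r i - 1))"

definition cell :: "('m \<Rightarrow> nat) \<Rightarrow> real^'m \<Rightarrow> real set" where
  "cell r x = {u. \<forall>i. lo r i (x $ i) < u \<and> u \<le> Gc i (x $ i) (r i)}"

definition acell :: "('m \<Rightarrow> nat) \<Rightarrow> real^'m \<Rightarrow> real" where
  "acell r x = measure lborel (cell r x)"

definition grid :: "('m \<Rightarrow> nat) set" where
  "grid = {r. \<forall>i. r i \<le> n i}"

lemma finite_grid: "finite grid"
proof -
  have "grid = Pi\<^sub>E UNIV (\<lambda>i. {..n i})" by (auto simp: grid_def PiE_def extensional_def Pi_def)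
  then show ?thesis by (simp add: finite_PiE)
qed

lemma kappa_mono: "j \<le> j' \<Longrightarrow> kappa kl \<beta> i j \<le> kappa kl \<beta> i j'"
  using beta_pos by (simp add: kappa_def mult_right_mono)

lemma Gc_bounds: "0 \<le> Gc i t j" "Gc i t j \<le> 1"
  using clamp_bounds by (auto simp: Gc_def)

lemma Gc_mono: "j \<le> j' \<Longrightarrow> Gc i t j \<le> Gc i t j'"
proof -
  assume jj: "j \<le> j'"
  show ?thesis
  proof (cases "n i \<le> j'")
    case True then show ?thesis using Gc_bounds by (simp add: Gc_def[of i t j'])
  next
    case False
    then have "\<not> n i \<le> j" using jj by auto
    moreover have "(t - kappa kl \<beta> i j') / \<beta> \<le> (t - kappa kl \<beta> i j) / \<beta>"
      using kappa_mono[OF jj, of i] beta_pos by (simp add: divide_right_mono)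
    ultimately show ?thesis using False clamp_mono by (auto simp: Gc_def)
  qed
qed

lemma lo_nonneg: "0 \<le> lo r i t" using Gc_bounds by (simp add: lo_def)

lemma cell_eq: "cell r x = {(MAX i. lo r i (x $ i)) <.. (MIN i. Gc i (x $ i) (r i))}"
  by (auto simp: cell_def)

lemma acell_eq: "acell r x = max 0 ((MIN i. Gc i (x $ i) (r i)) - (MAX i. lo r i (x $ i)))"
  unfolding acell_def cell_eq measure_lborel_Ioc' ..

lemma acell_nonneg: "0 \<le> acell r x" by (simp add: acell_eq)

lemma cell_sets: "cell r x \<in> sets lborel" unfolding cell_eq by simp

lemma Ioc_fin: "emeasure lborel {a<..b::real} \<noteq> \<infinity>"
  by (cases "a \<le> b") auto

lemma cell_fin: "emeasure lborel (cell r x) \<noteq> \<infinity>" unfolding cell_eq by (rule Ioc_fin)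

lemma cell_disj: "disjoint_family_on (\<lambda>r. cell r x) A"
unfolding disjoint_family_on_def proof (intro ballI impI)
  fix r r' assume "r \<in> A" "r' \<in> A" "r \<noteq> r'"
  then obtain i where ne: "r i \<noteq> r' i" by auto
  have *: False if "u \<in> cell s x" "u \<in> cell s' x" "s i < s' i" for u s s'
  proof -
    have "u \<le> Gc i (x $ i) (s i)" using that(1) by (auto simp: cell_def)
    also have "\<dots> \<le> Gc i (x $ i) (s' i - 1)" using that(3) by (intro Gc_mono) auto
    also have "\<dots> < u" using that(2,3) by (auto simp: cell_def lo_def split: if_splits)
    finally show False by simp
  qed
  show "cell r x \<inter> cell r' x = {}"
    using ne *[of _ r r'] *[of _ r' r] by (cases "r i < r' i") auto
qed

lemma cell_union:
  assumes "k \<in> grid"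
  shows "(\<Union>r\<in>{r\<in>grid. r \<le> k}. cell r x) = {0 <.. (MIN i. Gc i (x $ i) (k i))}"
proof (intro equalityI subsetI)
  fix u assume "u \<in> (\<Union>r\<in>{r\<in>grid. r \<le> k}. cell r x)"
  then obtain r where r: "r \<le> k" "u \<in> cell r x" by auto
  have "0 < u" using r(2) lo_nonneg by (auto simp: cell_def) (meson le_less_trans)
  moreover have "u \<le> Gc i (x $ i) (k i)" for i
    using r by (auto simp: cell_def le_fun_def intro: order_trans[OF _ Gc_mono])
  ultimately show "u \<in> {0 <.. (MIN i. Gc i (x $ i) (k i))}" by auto
next
  fix u assume u: "u \<in> {0 <.. (MIN i. Gc i (x $ i) (k i))}"
  then have u0: "0 < u" and uk: "\<And>i. u \<le> Gc i (x $ i) (k i)" by auto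
  define r where "r i = (LEAST j. u \<le> Gc i (x $ i) j)" for i
  have rk: "r i \<le> k i" for i unfolding r_def by (rule Least_le) (rule uk)
  have r1: "u \<le> Gc i (x $ i) (r i)" for i unfolding r_def by (rule LeastI) (rule uk)
  have r2: "lo r i (x $ i) < u" for i
  proof (cases "r i = 0")
    case True then show ?thesis using u0 by (simp add: lo_def)
  next
    case False
    then have "r i - 1 < r i" by simp
    then have "\<not> u \<le> Gc i (x $ i) (r i - 1)" unfolding r_def by (rule not_less_Least)
    then show ?thesis using False by (simp add: lo_def)
  qed
  have "r \<in> grid" using rk assms by (auto simp: grid_def intro: order_trans)
  moreover have "r \<le> k" using rk by (simp add: le_fun_def)
  moreover have "u \<in> cell r x" using r1 r2 by (simp add: cell_def)
  ultimately show "u \<in> (\<Union>r\<in>{r\<in>grid. r \<le> k}. cell r x)" by auto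
qed

lemma acell_sum_le:
  assumes "k \<in> grid"
  shows "(\<Sum>r\<in>{r\<in>grid. r \<le> k}. acell r x) = (MIN i. Gc i (x $ i) (k i))"
proof -
  have "(\<Sum>r\<in>{r\<in>grid. r \<le> k}. acell r x) = measure lborel (\<Union>r\<in>{r\<in>grid. r \<le> k}. cell r x)"
    unfolding acell_def
    by (rule measure_finite_Union[symmetric]) (use finite_grid cell_sets cell_disj cell_fin in auto)
  also have "\<dots> = (MIN i. Gc i (x $ i) (k i))"
    unfolding cell_union[OF assms] measure_lborel_Ioc'
    using Gc_bounds by (simp add: Min_ge_iff)
  finally show ?thesis .
qed

lemma n_grid: "n \<in> grid" by (simp add: grid_def)

lemma acell_sum: "(\<Sum>r\<in>grid. acell r x) = 1"
proof -
  have "{r\<in>grid. r \<le> n} = grid" by (auto simp: grid_def le_fun_def)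
  moreover have "(MIN i. Gc i (x $ i) (n i)) = 1" by (simp add: Gc_def)
  ultimately show ?thesis using acell_sum_le[OF n_grid, of x] by simp
qed

lemma acell_measurable[measurable]: "(\<lambda>x. acell r x) \<in> borel_measurable borel"
proof -
  have m1[measurable]: "(\<lambda>x. Gc i (x $ i) j) \<in> borel_measurable borel" for i j
    unfolding Gc_def clamp_def by measurable
  have m2[measurable]: "(\<lambda>x. lo r i (x $ i)) \<in> borel_measurable borel" for i
    unfolding lo_def by measurable
  show ?thesis unfolding acell_eq by measurable
qed

end

lemma MAX_mono_commute:
  fixes f :: "real \<Rightarrow> real"
  assumes "mono f" "finite L" "L \<noteq> {}"
  shows "(MAX i\<in>L. f (s i)) = f (MAX i\<in>L. s i)"
  using mono_Max_commute[OF assms(1), of "s ` L"] assms by (simp add: image_image)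

lemma clamp_split:
  assumes "0 < b"
  shows "clamp (M / b) = (max 0 M - max 0 (M - b)) / b"
  using assms by (auto simp: clamp_def max_def min_def field_simps)

context gridsetup begin

definition gfun :: "'m set \<Rightarrow> ('m \<Rightarrow> nat) \<Rightarrow> real^'m \<Rightarrow> real" where
  "gfun L j = (\<lambda>x. if L = {} then 0 else max 0 (MAX i\<in>L. max 0 (x $ i - kappa kl \<beta> i (j i))))"

lemma gfun_G0: "(\<forall>i\<in>L. j i \<le> n i) \<Longrightarrow> gfun L j \<in> G0 kl \<beta> n"
  unfolding G0_def gfun_def by blast

lemma gfun_measurable[measurable]: "gfun L j \<in> borel_measurable borel"
  unfolding gfun_def by measurable

lemma Min_Gc_formula:
  assumes "k \<in> grid"
  defines "L \<equiv> {i. k i < n i}"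
  shows "(MIN i. Gc i (x $ i) (k i)) = 1 - (gfun L k x - gfun L (\<lambda>i. k i + 1) x) / \<beta>"
proof (cases "L = {}")
  case True
  then have "\<And>i. n i \<le> k i" by (auto simp: L_def not_less)
  then show ?thesis using True by (simp add: Gc_def gfun_def)
next
  case False
  define s where "s i = x $ i - kappa kl \<beta> i (k i)" for i
  define M where "M = (MAX i\<in>L. s i)"
  have fin: "finite L" by simp
  have g1: "gfun L k x = max 0 M"
  proof -
    have mo: "mono (max (0::real))" by (rule monoI) (simp add: max_def)
    show ?thesis using False MAX_mono_commute[OF mo fin False, of s] by (simp add: gfun_def M_def s_def)
  qed
  have ks: "x $ i - kappa kl \<beta> i (Suc (k i)) = s i - \<beta>" for i
    by (simp add: s_def kappa_def algebra_simps)
  have g2: "gfun L (\<lambda>i. k i + 1) x = max 0 (M - \<beta>)"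
  proof -
    have "gfun L (\<lambda>i. k i + 1) x = max 0 (MAX i\<in>L. max 0 (s i - \<beta>))"
      using False by (simp add: gfun_def ks)
    also have "(MAX i\<in>L. max 0 (s i - \<beta>)) = max 0 ((MAX i\<in>L. s i) - \<beta>)"
    proof -
      have mo: "mono (\<lambda>t::real. max 0 (t - \<beta>))" by (rule monoI) (simp add: max_def)
      show ?thesis using MAX_mono_commute[OF mo fin False, of s] by simp
    qed
    finally show ?thesis by (simp add: M_def)
  qed
  obtain i0 where i0: "i0 \<in> L" "s i0 = M"
  proof -
    have "M \<in> s ` L" unfolding M_def using False fin by (intro Max_in) auto
    then show ?thesis using that by auto
  qed
  have sM: "i \<in> L \<Longrightarrow> s i \<le> M" for i unfolding M_def by simp
  have "(MIN i. Gc i (x $ i) (k i)) = 1 - clamp (M / \<beta>)"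
  proof (rule Min_eqI)
    fix y assume "y \<in> range (\<lambda>i. Gc i (x $ i) (k i))"
    then obtain i where y: "y = Gc i (x $ i) (k i)" by auto
    show "1 - clamp (M / \<beta>) \<le> y"
    proof (cases "i \<in> L")
      case True
      then have "clamp (s i / \<beta>) \<le> clamp (M / \<beta>)"
        using sM beta_pos by (intro clamp_mono divide_right_mono) auto
      then show ?thesis using True by (simp add: y Gc_def L_def s_def)
    next
      case False then show ?thesis using clamp_bounds[of "M / \<beta>"] by (simp add: y Gc_def L_def)
    qed
  next
    show "1 - clamp (M / \<beta>) \<in> range (\<lambda>i. Gc i (x $ i) (k i))"
      using i0 by (auto simp: Gc_def L_def s_def intro!: image_eqI[of _ _ i0])
  qed simp
  also have "\<dots> = 1 - (gfun L k x - gfun L (\<lambda>i. k i + 1) x) / \<beta>"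
    using clamp_split[OF beta_pos, of M] g1 g2 by simp
  finally show ?thesis .
qed

lemma Min_Gc_G0:
  assumes "k \<in> grid"
  defines "L \<equiv> {i. k i < n i}"
  shows "gfun L k \<in> G0 kl \<beta> n" "gfun L (\<lambda>i. k i + 1) \<in> G0 kl \<beta> n"
  using assms by (auto intro!: gfun_G0 simp: grid_def)

end

context gridsetup begin

definition dd :: "'m \<Rightarrow> real \<Rightarrow> real" where
  "dd i t = max 0 (kappa kl \<beta> i 0 - t) + max 0 (t - kappa kl \<beta> i (n i))"

lemma dd_nonneg: "0 \<le> dd i t" by (simp add: dd_def)

lemma dd_powr:
  assumes "0 < p"
  shows "dd i t powr p = max 0 (kappa kl \<beta> i 0 - t) powr p + max 0 (t - kappa kl \<beta> i (n i)) powr p"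
proof -
  have k: "kappa kl \<beta> i 0 \<le> kappa kl \<beta> i (n i)" by (rule kappa_mono) simp
  show ?thesis
  proof (cases "t \<le> kappa kl \<beta> i 0")
    case True
    then have "max 0 (t - kappa kl \<beta> i (n i)) = 0" using k by simp
    then show ?thesis using assms by (simp add: dd_def)
  next
    case False
    then have "max 0 (kappa kl \<beta> i 0 - t) = 0" by simp
    then show ?thesis using assms by (simp add: dd_def)
  qed
qed

lemma cell_disp:
  assumes "r \<in> grid" "0 < acell r x"
  shows "\<bar>x $ i - kappa kl \<beta> i (r i)\<bar> \<le> \<beta> + dd i (x $ i)"
proof -
  have "cell r x \<noteq> {}" using assms(2) by (auto simp: acell_def)
  then obtain u where u: "\<And>i. lo r i (x $ i) < u" "\<And>i. u \<le> Gc i (x $ i) (r i)"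
    by (auto simp: cell_def)
  define t where "t = x $ i"
  have rn: "r i \<le> n i" using assms(1) by (simp add: grid_def)
  have up: "0 < u" using u(1)[of i] lo_nonneg[of r i "x $ i"] by linarith
  have u1: "u \<le> 1" using u(2)[of i] Gc_bounds[of i "x $ i" "r i"] by linarith
  have A: "t < kappa kl \<beta> i (r i) + \<beta>" if "r i < n i"
  proof -
    have "u \<le> 1 - clamp ((t - kappa kl \<beta> i (r i)) / \<beta>)" using u(2)[of i] that by (simp add: Gc_def t_def)
    then have "clamp ((t - kappa kl \<beta> i (r i)) / \<beta>) < 1" using up by linarith
    then have "(t - kappa kl \<beta> i (r i)) / \<beta> < 1" by (auto simp: clamp_def)
    then show ?thesis using beta_pos by (simp add: field_simps)
  qed
  have B: "kappa kl \<beta> i (r i) - \<beta> < t" if "0 < r i"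
  proof -
    have "Gc i t (r i - 1) < u" using u(1)[of i] that by (simp add: lo_def t_def)
    moreover have "\<not> n i \<le> r i - 1" using that rn by auto
    ultimately have "1 - clamp ((t - kappa kl \<beta> i (r i - 1)) / \<beta>) < 1" using u1 by (simp add: Gc_def)
    then have "0 < clamp ((t - kappa kl \<beta> i (r i - 1)) / \<beta>)" by simp
    then have "0 < (t - kappa kl \<beta> i (r i - 1)) / \<beta>" by (auto simp: clamp_def)
    then have "kappa kl \<beta> i (r i - 1) < t" using beta_pos by (simp add: field_simps)
    moreover have "kappa kl \<beta> i (r i - 1) = kappa kl \<beta> i (r i) - \<beta>"
      using that by (simp add: kappa_def of_nat_diff algebra_simps)
    ultimately show ?thesis by simp
  qed
  have d1: "kappa kl \<beta> i 0 - t \<le> dd i t" "t - kappa kl \<beta> i (n i) \<le> dd i t" by (auto simp: dd_def)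
  have "\<bar>t - kappa kl \<beta> i (r i)\<bar> \<le> \<beta> + dd i t"
  proof (cases "kappa kl \<beta> i (r i) \<le> t")
    case True
    show ?thesis
    proof (cases "r i < n i")
      case True then show ?thesis using A[OF True] \<open>kappa kl \<beta> i (r i) \<le> t\<close> dd_nonneg[of i t] by linarith
    next
      case False then have "r i = n i" using rn by simp
      then show ?thesis using d1 \<open>kappa kl \<beta> i (r i) \<le> t\<close> beta_pos by auto
    qed
  next
    case False
    show ?thesis
    proof (cases "0 < r i")
      case True then show ?thesis using B[OF True] False dd_nonneg[of i t] by linarith
    next
      case F2: False then have "r i = 0" by simp
      then show ?thesis using d1 False beta_pos by auto
    qed
  qed
  then show ?thesis by (simp add: t_def)
qed

lemma pair_disp:
  assumes "r \<in> grid" "0 < acell r x" "0 < acell r y"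
  shows "\<bar>x $ i - y $ i\<bar> \<le> 2 * \<beta> + dd i (x $ i) + dd i (y $ i)"
  using cell_disp[OF assms(1,2), of i] cell_disp[OF assms(1,3), of i] by linarith

lemma dd_measurable[measurable]: "(\<lambda>x. dd i (x $ i)) \<in> borel_measurable borel"
  unfolding dd_def by measurable

end

context gridsetup begin

lemma acell_le1: "acell r x \<le> 1"
proof -
  have "(MIN i. Gc i (x $ i) (r i)) \<le> Gc undefined (x $ undefined) (r undefined)" by (rule Min_le) auto
  moreover have "lo r undefined (x $ undefined) \<le> (MAX i. lo r i (x $ i))" by (rule Max_ge) auto
  ultimately have "(MIN i. Gc i (x $ i) (r i)) - (MAX i. lo r i (x $ i)) \<le> 1"
    using Gc_bounds[of undefined "x $ undefined" "r undefined"] lo_nonneg[of r undefined "x $ undefined"]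
    by linarith
  then show ?thesis by (simp add: acell_eq)
qed

lemma acell_integrable:
  assumes "prob_space M" "sets M = sets borel"
  shows "integrable M (acell r)"
proof -
  interpret prob_space M by fact
  show ?thesis
    using acell_nonneg acell_le1 assms(2)
    by (intro integrable_const_bound[where B=1]) (auto simp: measurable_cong_sets[OF assms(2) refl])
qed

lemma sum_q_formula:
  assumes "prob_space M" "sets M = sets borel" "k \<in> grid"
    and int: "\<And>g. g \<in> G0 kl \<beta> n \<Longrightarrow> integrable M g"
  defines "L \<equiv> {i. k i < n i}"
  shows "(\<Sum>r\<in>{r\<in>grid. r \<le> k}. \<integral>x. acell r x \<partial>M)
     = 1 - ((\<integral>x. gfun L k x \<partial>M) - (\<integral>x. gfun L (\<lambda>i. k i + 1) x \<partial>M)) / \<beta>"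
proof -
  interpret prob_space M by fact
  have i1: "integrable M (gfun L k)" "integrable M (gfun L (\<lambda>i. k i + 1))"
    using int Min_Gc_G0[OF assms(3)] by (auto simp: L_def)
  have "(\<Sum>r\<in>{r\<in>grid. r \<le> k}. \<integral>x. acell r x \<partial>M) = (\<integral>x. (\<Sum>r\<in>{r\<in>grid. r \<le> k}. acell r x) \<partial>M)"
    using acell_integrable[OF assms(1,2)] by (subst Bochner_Integration.integral_sum) auto
  also have "\<dots> = (\<integral>x. 1 - (gfun L k x - gfun L (\<lambda>i. k i + 1) x) / \<beta> \<partial>M)"
    by (simp add: acell_sum_le[OF assms(3)] Min_Gc_formula[OF assms(3)] L_def)
  also have "\<dots> = 1 - ((\<integral>x. gfun L k x \<partial>M) - (\<integral>x. gfun L (\<lambda>i. k i + 1) x \<partial>M)) / \<beta>"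
    using i1 by (simp add: integral_diff prob_space)
  finally show ?thesis .
qed

lemma q_equal:
  assumes "prob_space M" "sets M = sets borel" "prob_space M'" "sets M' = sets borel"
    and G: "\<And>g. g \<in> G0 kl \<beta> n \<Longrightarrow> integrable M g \<and> integrable M' g \<and> (\<integral>x. g x \<partial>M') = (\<integral>x. g x \<partial>M)"
    and "k \<in> grid"
  shows "(\<integral>x. acell k x \<partial>M) = (\<integral>x. acell k x \<partial>M')"
proof -
  define Q where "Q r = (\<integral>x. acell r x \<partial>M)" for r
  define Q' where "Q' r = (\<integral>x. acell r x \<partial>M')" for r
  have S: "(\<Sum>r\<in>{r\<in>grid. r \<le> k}. Q r) = (\<Sum>r\<in>{r\<in>grid. r \<le> k}. Q' r)" if "k \<in> grid" for k
    unfolding Q_def Q'_def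
    using sum_q_formula[OF assms(1,2) that] sum_q_formula[OF assms(3,4) that] G Min_Gc_G0[OF that]
    by simp
  have "\<forall>k. sum k UNIV = m \<longrightarrow> k \<in> grid \<longrightarrow> Q k = Q' k" for m
  proof (induction m rule: less_induct)
    case (less m)
    show ?case
    proof (intro allI impI)
      fix k assume km: "sum k UNIV = m" and kg: "k \<in> grid"
      have fin: "finite {r\<in>grid. r \<le> k}" using finite_grid by simp
      have kin: "k \<in> {r\<in>grid. r \<le> k}" using kg by simp
      have rest: "(\<Sum>r\<in>{r\<in>grid. r \<le> k} - {k}. Q r) = (\<Sum>r\<in>{r\<in>grid. r \<le> k} - {k}. Q' r)"
      proof (rule sum.cong[OF refl])
        fix r assume r: "r \<in> {r\<in>grid. r \<le> k} - {k}"
        then have "r \<le> k" "r \<noteq> k" "r \<in> grid" by auto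
        then obtain i where "r i < k i" by (metis le_funD le_funI nless_le order_antisym)
        then have "sum r UNIV < sum k UNIV"
          using \<open>r \<le> k\<close> by (intro sum_strict_mono_ex1) (auto simp: le_fun_def)
        then show "Q r = Q' r" using less.IH km \<open>r \<in> grid\<close> by blast
      qed
      have "Q k + (\<Sum>r\<in>{r\<in>grid. r \<le> k} - {k}. Q r) = Q' k + (\<Sum>r\<in>{r\<in>grid. r \<le> k} - {k}. Q' r)"
        using S[OF kg] sum.remove[OF fin kin, of Q] sum.remove[OF fin kin, of Q'] by simp
      then show "Q k = Q' k" using rest by simp
    qed
  qed
  then show ?thesis using assms(6) by (simp add: Q_def Q'_def)
qed

end

lemma powr_add_integrable:
  fixes f g :: "'a \<Rightarrow> real"
  assumes p: "1 \<le> p" and f0: "\<And>x. 0 \<le> f x" and g0: "\<And>x. 0 \<le> g x"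
    and fm: "f \<in> borel_measurable M" and gm: "g \<in> borel_measurable M"
    and fi: "integrable M (\<lambda>x. f x powr p)" and gi: "integrable M (\<lambda>x. g x powr p)"
  shows "integrable M (\<lambda>x. (f x + g x) powr p)"
proof (rule Bochner_Integration.integrable_bound[where f="\<lambda>x. (1/2) powr (1 - p) * f x powr p + (1 - 1/2) powr (1 - p) * g x powr p"])
  show "integrable M (\<lambda>x. (1/2) powr (1 - p) * f x powr p + (1 - 1/2) powr (1 - p) * g x powr p)"
    using fi gi by auto
  show "(\<lambda>x. (f x + g x) powr p) \<in> borel_measurable M" using fm gm by measurable
  show "AE x in M. norm ((f x + g x) powr p) \<le> norm ((1/2) powr (1 - p) * f x powr p + (1 - 1/2) powr (1 - p) * g x powr p)"
  proof (rule AE_I2)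
    fix x
    have "(f x + g x) powr p \<le> (1/2) powr (1 - p) * f x powr p + (1 - 1/2) powr (1 - p) * g x powr p"
      by (rule conv2) (use f0 g0 p in auto)
    then show "norm ((f x + g x) powr p) \<le> norm ((1/2) powr (1 - p) * f x powr p + (1 - 1/2) powr (1 - p) * g x powr p)"
      by simp
  qed
qed

lemma mink_int:
  fixes f g :: "'i::finite \<Rightarrow> 'a \<Rightarrow> real"
  assumes p: "1 \<le> p" and f0: "\<And>i x. 0 \<le> f i x" and g0: "\<And>i x. 0 \<le> g i x"
    and fm: "\<And>i. f i \<in> borel_measurable M" and gm: "\<And>i. g i \<in> borel_measurable M"
    and fi: "\<And>i. integrable M (\<lambda>x. f i x powr p)" and gi: "\<And>i. integrable M (\<lambda>x. g i x powr p)"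
  shows "(\<Sum>i\<in>UNIV. \<integral>x. (f i x + g i x) powr p \<partial>M) powr (1 / p)
     \<le> (\<Sum>i\<in>UNIV. \<integral>x. f i x powr p \<partial>M) powr (1 / p) + (\<Sum>i\<in>UNIV. \<integral>x. g i x powr p \<partial>M) powr (1 / p)"
proof (rule mink2)
  have fgi: "integrable M (\<lambda>x. (f i x + g i x) powr p)" for i
    by (rule powr_add_integrable) (use assms in auto)
  show "0 \<le> (\<Sum>i\<in>UNIV. \<integral>x. (f i x + g i x) powr p \<partial>M)" "0 \<le> (\<Sum>i\<in>UNIV. \<integral>x. f i x powr p \<partial>M)"
    "0 \<le> (\<Sum>i\<in>UNIV. \<integral>x. g i x powr p \<partial>M)"
    by (auto intro!: sum_nonneg integral_nonneg_AE)
  show "1 \<le> p" by fact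
  fix l :: real assume l: "0 < l" "l < 1"
  have "(\<Sum>i\<in>UNIV. \<integral>x. (f i x + g i x) powr p \<partial>M)
      \<le> (\<Sum>i\<in>UNIV. \<integral>x. l powr (1 - p) * f i x powr p + (1 - l) powr (1 - p) * g i x powr p \<partial>M)"
  proof (intro sum_mono integral_mono)
    fix i x show "(f i x + g i x) powr p \<le> l powr (1 - p) * f i x powr p + (1 - l) powr (1 - p) * g i x powr p"
      by (rule conv2) (use assms l in auto)
  qed (use fgi fi gi in auto)
  also have "\<dots> = l powr (1 - p) * (\<Sum>i\<in>UNIV. \<integral>x. f i x powr p \<partial>M) + (1 - l) powr (1 - p) * (\<Sum>i\<in>UNIV. \<integral>x. g i x powr p \<partial>M)"
    using fi gi by (simp add: sum_distrib_left sum.distrib)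
  finally show "(\<Sum>i\<in>UNIV. \<integral>x. (f i x + g i x) powr p \<partial>M)
      \<le> l powr (1 - p) * (\<Sum>i\<in>UNIV. \<integral>x. f i x powr p \<partial>M) + (1 - l) powr (1 - p) * (\<Sum>i\<in>UNIV. \<integral>x. g i x powr p \<partial>M)" .
qed

context gridsetup begin

definition cQ :: "(('m \<Rightarrow> nat) \<Rightarrow> real) \<Rightarrow> ('m \<Rightarrow> nat) \<Rightarrow> real" where
  "cQ Q r = (if Q r = 0 then 0 else 1 / Q r)"

definition WQ :: "(('m \<Rightarrow> nat) \<Rightarrow> real) \<Rightarrow> real^'m \<Rightarrow> real^'m \<Rightarrow> real" where
  "WQ Q x y = (\<Sum>r\<in>grid. cQ Q r * acell r x * acell r y)"

lemma cQ_nonneg: "(\<And>r. 0 \<le> Q r) \<Longrightarrow> 0 \<le> cQ Q r" by (simp add: cQ_def)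

lemma WQ_nonneg: "(\<And>r. 0 \<le> Q r) \<Longrightarrow> 0 \<le> WQ Q x y"
  unfolding WQ_def by (intro sum_nonneg mult_nonneg_nonneg cQ_nonneg acell_nonneg) auto

lemma WQ_sym: "WQ Q x y = WQ Q y x" unfolding WQ_def by (simp add: ac_simps)

lemma WQ_measurable[measurable]: "(\<lambda>z. WQ Q (fst z) (snd z)) \<in> borel_measurable (borel \<Otimes>\<^sub>M borel)"
  unfolding WQ_def by measurable

lemma WQ_pos:
  assumes "(\<And>r. 0 \<le> Q r)" "0 < WQ Q x y"
  shows "\<exists>r\<in>grid. 0 < acell r x \<and> 0 < acell r y"
proof (rule ccontr)
  assume "\<not> ?thesis"
  then have "\<And>r. r \<in> grid \<Longrightarrow> cQ Q r * acell r x * acell r y = 0"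
    by (metis acell_nonneg less_eq_real_def mult_zero_right mult_not_zero)
  then have "WQ Q x y = 0" unfolding WQ_def by (intro sum.neutral) auto
  then show False using assms by simp
qed

lemma marg_inner:
  assumes pM: "prob_space M" and sM: "sets M = sets borel"
    and pM': "prob_space M'" and sM': "sets M' = sets borel"
    and Qdef: "\<And>r. Q r = (\<integral>x. acell r x \<partial>M)"
    and QM': "\<And>r. r \<in> grid \<Longrightarrow> (\<integral>x. acell r x \<partial>M') = Q r"
    and A: "A \<in> sets borel"
  shows "(\<integral>\<^sup>+x. \<integral>\<^sup>+y. ennreal (WQ Q x y) * indicator A x \<partial>M' \<partial>M) = emeasure M A"
proof -
  interpret M: prob_space M by fact
  interpret M': prob_space M' by fact
  have Q0: "0 \<le> Q r" for r unfolding Qdef by (intro integral_nonneg_AE) (simp add: acell_nonneg)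
  have ai: "integrable M' (acell r)" for r by (rule acell_integrable[OF pM' sM'])
  define s where "s x = (\<Sum>r\<in>grid. cQ Q r * Q r * acell r x)" for x
  have inner: "(\<integral>\<^sup>+y. ennreal (WQ Q x y) * indicator A x \<partial>M') = ennreal (indicator A x * s x)" for x
  proof -
    have "(\<integral>\<^sup>+y. ennreal (WQ Q x y) * indicator A x \<partial>M') = (\<integral>\<^sup>+y. ennreal (indicator A x * WQ Q x y) \<partial>M')"
      by (auto intro!: nn_integral_cong split: split_indicator)
    also have "\<dots> = ennreal (\<integral>y. indicator A x * WQ Q x y \<partial>M')"
      by (rule nn_integral_eq_integral)
         (use ai WQ_nonneg[OF Q0] in \<open>auto simp: WQ_def\<close>)
    also have "(\<integral>y. indicator A x * WQ Q x y \<partial>M') = indicator A x * s x"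
    proof -
      have e: "indicator A x * WQ Q x y = (\<Sum>r\<in>grid. (indicator A x * cQ Q r * acell r x) * acell r y)" for y
        by (simp add: WQ_def sum_distrib_left mult.assoc)
      have "(\<integral>y. indicator A x * WQ Q x y \<partial>M') = (\<Sum>r\<in>grid. (indicator A x * cQ Q r * acell r x) * (\<integral>y. acell r y \<partial>M'))"
        unfolding e using ai by (subst Bochner_Integration.integral_sum) auto
      also have "\<dots> = (\<Sum>r\<in>grid. indicator A x * (cQ Q r * Q r * acell r x))"
        by (rule sum.cong[OF refl]) (simp add: QM')
      also have "\<dots> = indicator A x * s x" by (simp add: s_def sum_distrib_left)
      finally show ?thesis .
    qed
    finally show ?thesis .
  qed
  have AE0: "AE x in M. \<forall>r\<in>grid. Q r = 0 \<longrightarrow> acell r x = 0"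
  proof (rule AE_finite_allI[OF finite_grid])
    fix r assume "r \<in> grid"
    show "AE x in M. Q r = 0 \<longrightarrow> acell r x = 0"
    proof (cases "Q r = 0")
      case True
      then have "AE x in M. acell r x = 0"
        using integral_nonneg_eq_0_iff_AE[OF acell_integrable[OF pM sM], of r] Qdef acell_nonneg by simp
      then show ?thesis by auto
    qed simp
  qed
  have AE1: "AE x in M. s x = 1"
    using AE0
  proof eventually_elim
    case (elim x)
    have "s x = (\<Sum>r\<in>grid. acell r x)"
      unfolding s_def by (rule sum.cong) (use elim in \<open>auto simp: cQ_def\<close>)
    then show ?case by (simp add: acell_sum)
  qed
  have "(\<integral>\<^sup>+x. \<integral>\<^sup>+y. ennreal (WQ Q x y) * indicator A x \<partial>M' \<partial>M) = (\<integral>\<^sup>+x. ennreal (indicator A x * s x) \<partial>M)"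
    by (simp add: inner)
  also have "\<dots> = (\<integral>\<^sup>+x. indicator A x \<partial>M)"
    by (rule nn_integral_cong_AE) (use AE1 in \<open>auto split: split_indicator\<close>)
  also have "\<dots> = emeasure M A" using A sM by simp
  finally show ?thesis .
qed

end

context gridsetup begin

lemma WQ_cong: "(\<And>r. r \<in> grid \<Longrightarrow> Q r = Q' r) \<Longrightarrow> WQ Q x y = WQ Q' x y"
  unfolding WQ_def cQ_def by (rule sum.cong) auto

lemma coupling:
  assumes pM: "prob_space M" and sM: "sets M = sets borel"
    and pM': "prob_space M'" and sM': "sets M' = sets borel"
    and Qdef: "\<And>r. Q r = (\<integral>x. acell r x \<partial>M)"
    and QM': "\<And>r. r \<in> grid \<Longrightarrow> (\<integral>x. acell r x \<partial>M') = Q r"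
  defines "\<pi> \<equiv> density (M \<Otimes>\<^sub>M M') (\<lambda>z. ennreal (WQ Q (fst z) (snd z)))"
  shows "\<pi> \<in> couplings M M'"
    and "\<And>g. g \<in> borel_measurable (borel \<Otimes>\<^sub>M borel) \<Longrightarrow>
          integral\<^sup>N \<pi> g = (\<integral>\<^sup>+z. ennreal (WQ Q (fst z) (snd z)) * g z \<partial>(M \<Otimes>\<^sub>M M'))"
proof -
  interpret M: prob_space M by fact
  interpret M': prob_space M' by fact
  interpret P: pair_sigma_finite M M' by unfold_locales
  have spM: "space M = UNIV" using sets_eq_imp_space_eq[OF sM] by simp
  have spM': "space M' = UNIV" using sets_eq_imp_space_eq[OF sM'] by simp
  have sP: "sets (M \<Otimes>\<^sub>M M') = sets (borel \<Otimes>\<^sub>M borel)" by (rule sets_pair_measure_cong[OF sM sM'])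
  have Wr[measurable]: "(\<lambda>z. WQ Q (fst z) (snd z)) \<in> borel_measurable (M \<Otimes>\<^sub>M M')"
    by (subst measurable_cong_sets[OF sP refl]) (rule WQ_measurable)
  have Wm: "(\<lambda>z. ennreal (WQ Q (fst z) (snd z))) \<in> borel_measurable (M \<Otimes>\<^sub>M M')"
    by measurable
  have sets_pi: "sets \<pi> = sets (borel \<Otimes>\<^sub>M borel)" unfolding \<pi>_def using sP by simp
  have space_pi: "space \<pi> = UNIV" unfolding \<pi>_def by (simp add: space_pair_measure spM spM')
  have m1: "emeasure \<pi> (A \<times> UNIV) = emeasure M A" if A: "A \<in> sets borel" for A
  proof -
    have AU: "A \<times> UNIV \<in> sets (M \<Otimes>\<^sub>M M')" using A sM sM' spM' by (metis pair_measureI sets.top)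
    have e0: "emeasure \<pi> (A \<times> UNIV) = (\<integral>\<^sup>+z. ennreal (WQ Q (fst z) (snd z)) * indicator (A \<times> UNIV) z \<partial>(M \<Otimes>\<^sub>M M'))"
      unfolding \<pi>_def by (rule emeasure_density[OF Wm AU])
    have mm: "(\<lambda>z. ennreal (WQ Q (fst z) (snd z)) * indicator (A \<times> UNIV) z) \<in> borel_measurable (M \<Otimes>\<^sub>M M')"
      using Wm AU by measurable
    have "(\<integral>\<^sup>+z. ennreal (WQ Q (fst z) (snd z)) * indicator (A \<times> UNIV) z \<partial>(M \<Otimes>\<^sub>M M')) = (\<integral>\<^sup>+x. \<integral>\<^sup>+y. ennreal (WQ Q (fst (x, y)) (snd (x, y))) * indicator (A \<times> UNIV) (x, y) \<partial>M' \<partial>M)"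
      by (rule M'.nn_integral_fst[OF mm, symmetric])
    also have "\<dots> = (\<integral>\<^sup>+x. \<integral>\<^sup>+y. ennreal (WQ Q x y) * indicator A x \<partial>M' \<partial>M)"
      by (simp add: indicator_times)
    also have "\<dots> = emeasure M A" by (rule marg_inner[OF pM sM pM' sM' Qdef QM' A])
    finally show ?thesis using e0 by simp
  qed
  have m2: "emeasure \<pi> (UNIV \<times> B) = emeasure M' B" if B: "B \<in> sets borel" for B
  proof -
    define Q' where "Q' r = (\<integral>x. acell r x \<partial>M')" for r
    have QQ: "r \<in> grid \<Longrightarrow> Q' r = Q r" for r by (simp add: Q'_def QM')
    have UB: "UNIV \<times> B \<in> sets (M \<Otimes>\<^sub>M M')" using B sM sM' spM by (metis pair_measureI sets.top)
    have e0: "emeasure \<pi> (UNIV \<times> B) = (\<integral>\<^sup>+z. ennreal (WQ Q (fst z) (snd z)) * indicator (UNIV \<times> B) z \<partial>(M \<Otimes>\<^sub>M M'))"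
      unfolding \<pi>_def by (rule emeasure_density[OF Wm UB])
    have mm: "(\<lambda>z. ennreal (WQ Q (fst z) (snd z)) * indicator (UNIV \<times> B) z) \<in> borel_measurable (M \<Otimes>\<^sub>M M')"
      using Wm UB by measurable
    have "(\<integral>\<^sup>+z. ennreal (WQ Q (fst z) (snd z)) * indicator (UNIV \<times> B) z \<partial>(M \<Otimes>\<^sub>M M')) = (\<integral>\<^sup>+y. \<integral>\<^sup>+x. ennreal (WQ Q (fst (x, y)) (snd (x, y))) * indicator (UNIV \<times> B) (x, y) \<partial>M \<partial>M')"
      by (rule P.nn_integral_snd[OF mm, symmetric])
    also have "\<dots> = (\<integral>\<^sup>+y. \<integral>\<^sup>+x. ennreal (WQ Q x y) * indicator B y \<partial>M \<partial>M')"
      by (simp add: indicator_times)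
    also have "\<dots> = (\<integral>\<^sup>+y. \<integral>\<^sup>+x. ennreal (WQ Q' y x) * indicator B y \<partial>M \<partial>M')"
    proof -
      have "WQ Q x y = WQ Q' y x" for x y using WQ_cong[of Q Q' x y] QQ WQ_sym[of Q' x y] by auto
      then show ?thesis by simp
    qed
    also have "\<dots> = emeasure M' B"
      by (rule marg_inner[OF pM' sM' pM sM]) (use Q'_def QQ QM' Qdef B in auto)
    finally show ?thesis using e0 by simp
  qed
  have pi_prob: "prob_space \<pi>"
  proof
    have "emeasure \<pi> (space \<pi>) = emeasure \<pi> (UNIV \<times> UNIV)" by (simp add: space_pi)
    also have "\<dots> = emeasure M UNIV" by (rule m1) simp
    also have "\<dots> = 1" using M.emeasure_space_1 spM by simp
    finally show "emeasure \<pi> (space \<pi>) = 1" .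
  qed
  have fstm: "fst \<in> measurable \<pi> borel" using measurable_cong_sets[OF sets_pi refl] measurable_fst by auto
  have sndm: "snd \<in> measurable \<pi> borel" using measurable_cong_sets[OF sets_pi refl] measurable_snd by auto
  have d1: "distr \<pi> borel fst = M"
  proof (rule measure_eqI)
    show "sets (distr \<pi> borel fst) = sets M" using sM by simp
    fix A assume "A \<in> sets (distr \<pi> borel fst)"
    then have A: "A \<in> sets borel" by simp
    have "fst -` A \<inter> space \<pi> = A \<times> UNIV" by (auto simp: space_pi)
    then show "emeasure (distr \<pi> borel fst) A = emeasure M A"
      using emeasure_distr[OF fstm A] m1[OF A] by simp
  qed
  have d2: "distr \<pi> borel snd = M'"
  proof (rule measure_eqI)
    show "sets (distr \<pi> borel snd) = sets M'" using sM' by simp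
    fix A assume "A \<in> sets (distr \<pi> borel snd)"
    then have A: "A \<in> sets borel" by simp
    have "snd -` A \<inter> space \<pi> = UNIV \<times> A" by (auto simp: space_pi)
    then show "emeasure (distr \<pi> borel snd) A = emeasure M' A"
      using emeasure_distr[OF sndm A] m2[OF A] by simp
  qed
  show "\<pi> \<in> couplings M M'" unfolding couplings_def using pi_prob sets_pi d1 d2 by auto
  fix g :: "(real^'m) \<times> (real^'m) \<Rightarrow> ennreal" assume g: "g \<in> borel_measurable (borel \<Otimes>\<^sub>M borel)"
  show "integral\<^sup>N \<pi> g = (\<integral>\<^sup>+z. ennreal (WQ Q (fst z) (snd z)) * g z \<partial>(M \<Otimes>\<^sub>M M'))"
    unfolding \<pi>_def by (rule nn_integral_density[OF Wm]) (use g measurable_cong_sets[OF sP refl] in auto)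
qed

end

lemma N_cont:
  fixes N :: "real^'m \<Rightarrow> real"
  assumes "is_norm N" "1 \<le> p" "\<forall>x. N x \<le> C * (\<Sum>i\<in>UNIV. \<bar>x $ i\<bar> powr p) powr (1 / p)"
  shows "continuous_on UNIV N"
proof -
  define K where "K = max 0 C * real CARD('m) powr (1 / p)"
  have K0: "0 \<le> K" by (simp add: K_def)
  have NK: "N z \<le> K * norm z" for z
  proof -
    have "N z \<le> C * (\<Sum>i\<in>UNIV. \<bar>z $ i\<bar> powr p) powr (1 / p)" using assms(3) by auto
    also have "\<dots> \<le> max 0 C * (\<Sum>i\<in>UNIV. \<bar>z $ i\<bar> powr p) powr (1 / p)"
      by (intro mult_right_mono) auto
    also have "\<dots> \<le> max 0 C * (real CARD('m) powr (1 / p) * norm z)"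
      by (intro mult_left_mono pnorm_le_norm assms(2)) auto
    finally show ?thesis by (simp add: K_def)
  qed
  have "K-lipschitz_on UNIV N"
  proof (rule lipschitz_onI)
    fix x y :: "real^'m"
    have "dist (N x) (N y) \<le> N (x - y)" using isnorm_diff[OF assms(1)] by (simp add: dist_real_def)
    also have "\<dots> \<le> K * dist x y" using NK by (simp add: dist_norm)
    finally show "dist (N x) (N y) \<le> K * dist x y" .
  qed (rule K0)
  then show ?thesis using lipschitz_on_continuous_on by blast
qed

lemma N_pow_bound:
  fixes N :: "real^'m \<Rightarrow> real"
  assumes "is_norm N" "1 \<le> p" "1 \<le> C" "\<forall>x. N x \<le> C * (\<Sum>i\<in>UNIV. \<bar>x $ i\<bar> powr p) powr (1 / p)"
    and e: "\<And>i. \<bar>x $ i - y $ i\<bar> \<le> e i"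
  shows "N (x - y) powr p \<le> C powr p * (\<Sum>i\<in>UNIV. e i powr p)"
proof -
  have e0: "0 \<le> e i" for i using e[of i] by linarith
  have S0: "0 \<le> (\<Sum>i\<in>UNIV. e i powr p)" by (auto intro: sum_nonneg)
  have "N (x - y) \<le> C * (\<Sum>i\<in>UNIV. \<bar>(x - y) $ i\<bar> powr p) powr (1 / p)" using assms(4) by blast
  also have "\<dots> \<le> C * (\<Sum>i\<in>UNIV. e i powr p) powr (1 / p)"
    using assms(2,3) e by (intro mult_left_mono powr_mono2 sum_mono) (auto intro: sum_nonneg)
  finally have "N (x - y) powr p \<le> (C * (\<Sum>i\<in>UNIV. e i powr p) powr (1 / p)) powr p"
    using isnormD(1)[OF assms(1)] assms(2) by (intro powr_mono2) auto
  also have "\<dots> = C powr p * (\<Sum>i\<in>UNIV. e i powr p)"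
    using assms(2,3) S0 by (simp add: powr_mult powr_powr)
  finally show ?thesis .
qed

context gridsetup begin

lemma Wp_bound:
  fixes N :: "real^'m \<Rightarrow> real"
  assumes nN: "is_norm N" and p: "1 \<le> p" and C: "1 \<le> C"
    and NC: "\<forall>x. N x \<le> C * (\<Sum>i\<in>UNIV. \<bar>x $ i\<bar> powr p) powr (1 / p)"
    and pM: "prob_space M" and sM: "sets M = sets borel"
    and pM': "prob_space M'" and sM': "sets M' = sets borel"
    and QM': "\<And>r. r \<in> grid \<Longrightarrow> (\<integral>x. acell r x \<partial>M') = (\<integral>x. acell r x \<partial>M)"
    and iM: "\<And>i. integrable M (\<lambda>x. dd i (x $ i) powr p)"
    and iM': "\<And>i. integrable M' (\<lambda>x. dd i (x $ i) powr p)"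
    and TT: "(\<Sum>i\<in>UNIV. \<integral>x. dd i (x $ i) powr p \<partial>M') = (\<Sum>i\<in>UNIV. \<integral>x. dd i (x $ i) powr p \<partial>M)"
  shows "Wp N p M M' \<le> C * (2 * \<beta> * real CARD('m) powr (1 / p)
            + 2 * (\<Sum>i\<in>UNIV. \<integral>x. dd i (x $ i) powr p \<partial>M) powr (1 / p))"
proof -
  define T where "T = (\<Sum>i\<in>UNIV. \<integral>x. dd i (x $ i) powr p \<partial>M)"
  define Q where "Q r = (\<integral>x. acell r x \<partial>M)" for r
  define \<pi> where "\<pi> = density (M \<Otimes>\<^sub>M M') (\<lambda>z. ennreal (WQ Q (fst z) (snd z)))"
  have cpl: "\<pi> \<in> couplings M M'"
    unfolding \<pi>_def by (rule coupling(1)[OF pM sM pM' sM']) (auto simp: Q_def QM')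
  have nnf: "integral\<^sup>N \<pi> g = (\<integral>\<^sup>+z. ennreal (WQ Q (fst z) (snd z)) * g z \<partial>(M \<Otimes>\<^sub>M M'))"
    if "g \<in> borel_measurable (borel \<Otimes>\<^sub>M borel)" for g
    unfolding \<pi>_def by (rule coupling(2)[OF pM sM pM' sM' _ _ that]) (auto simp: Q_def QM')
  have pp: "prob_space \<pi>" and spi: "sets \<pi> = sets (borel \<Otimes>\<^sub>M borel)"
    and d1: "distr \<pi> borel fst = M" and d2: "distr \<pi> borel snd = M'"
    using cpl by (auto simp: couplings_def)
  interpret P: prob_space \<pi> by (rule pp)
  have p0: "0 < p" using p by simp
  have Q0: "0 \<le> Q r" for r unfolding Q_def by (intro integral_nonneg_AE) (simp add: acell_nonneg)
  have [measurable_cong]: "sets \<pi> = sets (borel \<Otimes>\<^sub>M borel)" by (rule spi)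
  have fstm[measurable]: "fst \<in> measurable \<pi> borel" using measurable_cong_sets[OF spi refl] measurable_fst by auto
  have sndm[measurable]: "snd \<in> measurable \<pi> borel" using measurable_cong_sets[OF spi refl] measurable_snd by auto
  have Nm[measurable]: "N \<in> borel_measurable borel"
    by (rule borel_measurable_continuous_onI[OF N_cont[OF nN p NC]])
  define Dx where "Dx i z = dd i (fst z $ i)" for i and z :: "(real^'m) \<times> (real^'m)"
  define Dy where "Dy i z = dd i (snd z $ i)" for i and z :: "(real^'m) \<times> (real^'m)"
  have ddm: "(\<lambda>x. dd i (x $ i)) \<in> borel_measurable borel" for i by (rule dd_measurable)
  have Dxm[measurable]: "Dx i \<in> borel_measurable \<pi>" for i
    unfolding Dx_def using measurable_compose[OF fstm ddm] by simp
  have Dym[measurable]: "Dy i \<in> borel_measurable \<pi>" for i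
    unfolding Dy_def using measurable_compose[OF sndm ddm] by simp
  have Dxm'[measurable]: "Dx i \<in> borel_measurable (borel \<Otimes>\<^sub>M borel)" for i
    unfolding Dx_def using measurable_compose[OF measurable_fst ddm] by simp
  have Dym'[measurable]: "Dy i \<in> borel_measurable (borel \<Otimes>\<^sub>M borel)" for i
    unfolding Dy_def using measurable_compose[OF measurable_snd ddm] by simp
  have ddpm: "(\<lambda>x. dd i (x $ i) powr p) \<in> borel_measurable borel" for i using ddm by measurable
  have iDx: "integrable \<pi> (\<lambda>z. Dx i z powr p)" for i
    using integrable_distr_eq[OF fstm ddpm, of i] iM[of i] d1 by (simp add: Dx_def)
  have iDy: "integrable \<pi> (\<lambda>z. Dy i z powr p)" for i
    using integrable_distr_eq[OF sndm ddpm, of i] iM'[of i] d2 by (simp add: Dy_def)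
  have IDx: "(\<integral>z. Dx i z powr p \<partial>\<pi>) = (\<integral>x. dd i (x $ i) powr p \<partial>M)" for i
    using integral_distr[OF fstm ddpm, of i] d1 by (simp add: Dx_def)
  have IDy: "(\<integral>z. Dy i z powr p \<partial>\<pi>) = (\<integral>x. dd i (x $ i) powr p \<partial>M')" for i
    using integral_distr[OF sndm ddpm, of i] d2 by (simp add: Dy_def)
  have Dx0: "0 \<le> Dx i z" "0 \<le> Dy i z" for i z by (simp_all add: Dx_def Dy_def dd_nonneg)
  have iDxy: "integrable \<pi> (\<lambda>z. (Dx i z + Dy i z) powr p)" for i
    by (rule powr_add_integrable[OF p]) (use Dx0 iDx iDy in auto)
  have iE: "integrable \<pi> (\<lambda>z. (2 * \<beta> + (Dx i z + Dy i z)) powr p)" for i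
    by (rule powr_add_integrable[OF p]) (use Dx0 iDxy beta_pos in \<open>auto intro: add_nonneg_nonneg\<close>)
  define X where "X = (\<Sum>i\<in>UNIV. \<integral>z. (2 * \<beta> + (Dx i z + Dy i z)) powr p \<partial>\<pi>)"
  define H where "H z = C powr p * (\<Sum>i\<in>UNIV. (2 * \<beta> + (Dx i z + Dy i z)) powr p)" for z
  have iH: "integrable \<pi> H" unfolding H_def using iE by auto
  have IH: "(\<integral>z. H z \<partial>\<pi>) = C powr p * X" unfolding H_def X_def using iE
    by (simp add: Bochner_Integration.integral_sum)
  have H0: "0 \<le> H z" for z unfolding H_def by (intro mult_nonneg_nonneg sum_nonneg) auto
  have Hm: "(\<lambda>z. ennreal (H z)) \<in> borel_measurable (borel \<Otimes>\<^sub>M borel)" unfolding H_def by measurable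
  have gm: "(\<lambda>z. ennreal (N (fst z - snd z) powr p)) \<in> borel_measurable (borel \<Otimes>\<^sub>M borel)" by measurable
  have pw: "ennreal (WQ Q (fst z) (snd z)) * ennreal (N (fst z - snd z) powr p)
        \<le> ennreal (WQ Q (fst z) (snd z)) * ennreal (H z)" for z
  proof (cases "WQ Q (fst z) (snd z) = 0")
    case True then show ?thesis by simp
  next
    case False
    then have "0 < WQ Q (fst z) (snd z)" using WQ_nonneg[of Q, OF Q0] by (simp add: less_le)
    then obtain r where r: "r \<in> grid" "0 < acell r (fst z)" "0 < acell r (snd z)"
      using WQ_pos[of Q, OF Q0] by blast
    have "N (fst z - snd z) powr p \<le> H z"
      unfolding H_def Dx_def Dy_def
      by (rule N_pow_bound[OF nN p C NC]) (use pair_disp[OF r] in \<open>simp add: add.assoc\<close>)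
    then show ?thesis by (intro mult_left_mono ennreal_leI) auto
  qed
  have cost: "(\<integral>\<^sup>+z. ennreal (N (fst z - snd z) powr p) \<partial>\<pi>) \<le> ennreal (C powr p * X)"
  proof -
    have "(\<integral>\<^sup>+z. ennreal (N (fst z - snd z) powr p) \<partial>\<pi>)
        = (\<integral>\<^sup>+z. ennreal (WQ Q (fst z) (snd z)) * ennreal (N (fst z - snd z) powr p) \<partial>(M \<Otimes>\<^sub>M M'))"
      by (rule nnf[OF gm])
    also have "\<dots> \<le> (\<integral>\<^sup>+z. ennreal (WQ Q (fst z) (snd z)) * ennreal (H z) \<partial>(M \<Otimes>\<^sub>M M'))"
      by (intro nn_integral_mono pw)
    also have "\<dots> = (\<integral>\<^sup>+z. ennreal (H z) \<partial>\<pi>)" by (rule nnf[OF Hm, symmetric])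
    also have "\<dots> = ennreal (\<integral>z. H z \<partial>\<pi>)" by (rule nn_integral_eq_integral[OF iH]) (simp add: H0)
    finally show ?thesis by (simp add: IH)
  qed
  have X0: "0 \<le> X" unfolding X_def using Dx0 beta_pos by (auto intro!: sum_nonneg integral_nonneg_AE)
  have mk1: "X powr (1 / p) \<le> (\<Sum>i\<in>(UNIV::'m set). \<integral>z. (2 * \<beta>) powr p \<partial>\<pi>) powr (1 / p)
        + (\<Sum>i\<in>UNIV. \<integral>z. (Dx i z + Dy i z) powr p \<partial>\<pi>) powr (1 / p)"
    unfolding X_def
    using mink_int[OF p, where f="\<lambda>i z. 2 * \<beta>" and g="\<lambda>i z. Dx i z + Dy i z" and M=\<pi>]
    using Dx0 beta_pos iDxy by auto
  have mk2: "(\<Sum>i\<in>UNIV. \<integral>z. (Dx i z + Dy i z) powr p \<partial>\<pi>) powr (1 / p)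
        \<le> (\<Sum>i\<in>UNIV. \<integral>z. Dx i z powr p \<partial>\<pi>) powr (1 / p) + (\<Sum>i\<in>UNIV. \<integral>z. Dy i z powr p \<partial>\<pi>) powr (1 / p)"
    by (rule mink_int[OF p]) (use Dx0 iDx iDy in auto)
  have c1: "(\<Sum>i\<in>(UNIV::'m set). \<integral>z. (2 * \<beta>) powr p \<partial>\<pi>) powr (1 / p) = 2 * \<beta> * real CARD('m) powr (1 / p)"
    using beta_pos p0 by (simp add: P.prob_space powr_mult powr_powr)
  have Xb: "X powr (1 / p) \<le> 2 * \<beta> * real CARD('m) powr (1 / p) + 2 * T powr (1 / p)"
    using mk1 mk2 c1 IDx IDy TT by (simp add: T_def)
  define I where "I = (INF \<pi>\<in>couplings M M'. \<integral>\<^sup>+ z. ennreal (N (fst z - snd z) powr p) \<partial>\<pi>)"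
  have "I \<le> ennreal (C powr p * X)" unfolding I_def using cpl cost by (meson INF_lower2)
  then have "enn2real I \<le> C powr p * X"
    using X0 C by (metis enn2real_ennreal enn2real_mono ennreal_less_top powr_ge_zero zero_le_mult_iff)
  then have "enn2real I powr (1 / p) \<le> (C powr p * X) powr (1 / p)"
    using p0 by (intro powr_mono2) auto
  also have "\<dots> = C * X powr (1 / p)" using C X0 p0 by (simp add: powr_mult powr_powr)
  also have "\<dots> \<le> C * (2 * \<beta> * real CARD('m) powr (1 / p) + 2 * T powr (1 / p))"
    using Xb C by (intro mult_left_mono) auto
  finally show ?thesis by (simp add: Wp_def I_def T_def)
qed

end

lemma abs_le_powr: "1 \<le> p \<Longrightarrow> \<bar>t::real\<bar> \<le> 1 + \<bar>t\<bar> powr p"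
proof (cases "\<bar>t\<bar> \<le> 1")
  case True then show ?thesis by (smt (verit) powr_ge_zero)
next
  case False
  assume p: "1 \<le> p"
  then have "\<bar>t\<bar> powr 1 \<le> \<bar>t\<bar> powr p" using False by (intro powr_mono) auto
  then show ?thesis using False by simp
qed

lemma from_powr:
  fixes g :: "'a::topological_space \<Rightarrow> real"
  assumes "prob_space M" "sets M = sets borel" "1 \<le> p" "g \<in> borel_measurable borel"
    and "integrable M (\<lambda>x. \<bar>g x\<bar> powr p)"
  shows "integrable M g"
proof -
  interpret prob_space M by fact
  have gm: "g \<in> borel_measurable M" using assms(2,4) measurable_cong_sets by blast
  show ?thesis
  proof (rule Bochner_Integration.integrable_bound[where f="\<lambda>x. 1 + \<bar>g x\<bar> powr p"])
    show "integrable M (\<lambda>x. 1 + \<bar>g x\<bar> powr p)" using assms(5) by auto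
    show "AE x in M. norm (g x) \<le> norm (1 + \<bar>g x\<bar> powr p)"
      using abs_le_powr[OF assms(3)] by (auto intro!: AE_I2 simp: abs_of_nonneg add_nonneg_nonneg)
  qed (rule gm)
qed

lemma mu_coord:
  fixes N :: "real^'m \<Rightarrow> real"
  assumes nN: "is_norm N" and p: "1 \<le> p" and NC: "\<forall>x. N x \<le> C * (\<Sum>i\<in>UNIV. \<bar>x $ i\<bar> powr p) powr (1 / p)"
    and mu: "\<mu> \<in> Pp N p"
  shows "integrable \<mu> (\<lambda>x. \<bar>x $ i\<bar> powr p)" "integrable \<mu> (\<lambda>x. x $ i)"
proof -
  have pm: "prob_space \<mu>" and sm: "sets \<mu> = sets borel" and iN: "integrable \<mu> (\<lambda>x. N x powr p)"
    using mu by (auto simp: Pp_def)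
  obtain c where c: "0 < c" "\<And>x. norm x \<le> c * N x" using norm_lower[OF nN p NC] by blast
  have [measurable_cong]: "sets \<mu> = sets borel" by (rule sm)
  show i1: "integrable \<mu> (\<lambda>x. \<bar>x $ i\<bar> powr p)"
  proof (rule Bochner_Integration.integrable_bound[where f="\<lambda>x. c powr p * N x powr p"])
    show "integrable \<mu> (\<lambda>x. c powr p * N x powr p)" using iN by auto
    show "(\<lambda>x. \<bar>x $ i\<bar> powr p) \<in> borel_measurable \<mu>" by measurable
    show "AE x in \<mu>. norm (\<bar>x $ i\<bar> powr p) \<le> norm (c powr p * N x powr p)"
    proof (rule AE_I2)
      fix x
      have "\<bar>x $ i\<bar> \<le> c * N x" using component_le_norm_cart[of x i] c(2)[of x] by linarith
      then have "\<bar>x $ i\<bar> powr p \<le> (c * N x) powr p" using p by (intro powr_mono2) auto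
      also have "\<dots> = c powr p * N x powr p" using c(1) isnormD(1)[OF nN] by (simp add: powr_mult)
      finally show "norm (\<bar>x $ i\<bar> powr p) \<le> norm (c powr p * N x powr p)" by simp
    qed
  qed
  show "integrable \<mu> (\<lambda>x. x $ i)" by (rule from_powr[OF pm sm p _ i1]) simp
qed

lemma mu_lin:
  fixes N :: "real^'m \<Rightarrow> real"
  assumes nN: "is_norm N" and p: "1 \<le> p" and NC: "\<forall>x. N x \<le> C * (\<Sum>i\<in>UNIV. \<bar>x $ i\<bar> powr p) powr (1 / p)"
    and mu: "\<mu> \<in> Pp N p" and gm: "g \<in> borel_measurable borel"
    and gb: "\<And>x. \<bar>g x\<bar> \<le> K + (\<Sum>i\<in>UNIV. \<bar>x $ i\<bar>)"
  shows "integrable \<mu> g"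
proof -
  have pm: "prob_space \<mu>" and sm: "sets \<mu> = sets borel" using mu by (auto simp: Pp_def)
  interpret prob_space \<mu> by (rule pm)
  show ?thesis
  proof (rule Bochner_Integration.integrable_bound[where f="\<lambda>x. K + (\<Sum>i\<in>UNIV. \<bar>x $ i\<bar>)"])
    show "integrable \<mu> (\<lambda>x. K + (\<Sum>i\<in>UNIV. \<bar>x $ i\<bar>))"
      using mu_coord(2)[OF nN p NC mu] by auto
    show "g \<in> borel_measurable \<mu>" using gm sm measurable_cong_sets by blast
    show "AE x in \<mu>. norm (g x) \<le> norm (K + (\<Sum>i\<in>UNIV. \<bar>x $ i\<bar>))"
      using gb by (auto intro!: AE_I2 order_trans[OF _ abs_ge_self])
  qed
qed

context gridsetup begin

lemma gfun_bound: "\<bar>gfun L j x\<bar> \<le> (\<Sum>i\<in>UNIV. \<bar>kappa kl \<beta> i (j i)\<bar>) + (\<Sum>i\<in>UNIV. \<bar>x $ i\<bar>)"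
proof -
  define h where "h i = max 0 (x $ i - kappa kl \<beta> i (j i))" for i
  have h0: "0 \<le> h i" for i by (simp add: h_def)
  have hb: "h i \<le> \<bar>kappa kl \<beta> i (j i)\<bar> + \<bar>x $ i\<bar>" for i by (simp add: h_def)
  have "\<bar>gfun L j x\<bar> \<le> (\<Sum>i\<in>UNIV. h i)"
  proof (cases "L = {}")
    case True then show ?thesis by (simp add: gfun_def h0 sum_nonneg)
  next
    case False
    have "(MAX i\<in>L. h i) \<le> (\<Sum>i\<in>UNIV. h i)"
      using False by (subst Max_le_iff) (auto intro!: member_le_sum h0)
    moreover have "0 \<le> (\<Sum>i\<in>UNIV. h i)" by (simp add: h0 sum_nonneg)
    ultimately show ?thesis using False by (simp add: gfun_def h_def[symmetric])
  qed
  also have "\<dots> \<le> (\<Sum>i\<in>UNIV. \<bar>kappa kl \<beta> i (j i)\<bar> + \<bar>x $ i\<bar>)" by (intro sum_mono hb)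
  finally show ?thesis by (simp add: sum.distrib)
qed

lemma G0_eq: "g \<in> G0 kl \<beta> n \<Longrightarrow> \<exists>L j. g = gfun L j \<and> (\<forall>i\<in>L. j i \<le> n i)"
  unfolding G0_def gfun_def by blast

lemma dd_bound: "dd i t \<le> \<bar>t\<bar> + (\<bar>kappa kl \<beta> i 0\<bar> + \<bar>kappa kl \<beta> i (n i)\<bar>)"
  unfolding dd_def by (auto simp: max_def)

lemma dd_int_mu:
  fixes N :: "real^'m \<Rightarrow> real"
  assumes nN: "is_norm N" and p: "1 \<le> p" and NC: "\<forall>x. N x \<le> C * (\<Sum>i\<in>UNIV. \<bar>x $ i\<bar> powr p) powr (1 / p)"
    and mu: "\<mu> \<in> Pp N p"
  shows "integrable \<mu> (\<lambda>x. dd i (x $ i) powr p)"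
proof -
  have pm: "prob_space \<mu>" and sm: "sets \<mu> = sets borel" using mu by (auto simp: Pp_def)
  interpret prob_space \<mu> by (rule pm)
  have [measurable_cong]: "sets \<mu> = sets borel" by (rule sm)
  define K where "K = \<bar>kappa kl \<beta> i 0\<bar> + \<bar>kappa kl \<beta> i (n i)\<bar>"
  have K0: "0 \<le> K" by (simp add: K_def)
  have ii: "integrable \<mu> (\<lambda>x. (\<bar>x $ i\<bar> + K) powr p)"
    by (rule powr_add_integrable[OF p]) (use K0 mu_coord(1)[OF nN p NC mu] in auto)
  show ?thesis
  proof (rule Bochner_Integration.integrable_bound[OF ii])
    show "(\<lambda>x. dd i (x $ i) powr p) \<in> borel_measurable \<mu>" unfolding dd_def by measurable
    show "AE x in \<mu>. norm (dd i (x $ i) powr p) \<le> norm ((\<bar>x $ i\<bar> + K) powr p)"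
      using dd_bound dd_nonneg p by (auto intro!: AE_I2 powr_mono2 simp: K_def)
  qed
qed

end

context gridsetup begin

lemma gfun_single: "gfun {i} j x = max 0 (x $ i - kappa kl \<beta> i (j i))"
  by (simp add: gfun_def)

lemma part1:
  fixes N :: "real^'m \<Rightarrow> real" and \<mu> :: "(real^'m) measure"
  assumes nN: "is_norm N" and p: "1 \<le> p" and mu: "\<mu> \<in> Pp N p" and C: "1 \<le> C"
    and NC: "\<forall>x. N x \<le> C * (\<Sum>i\<in>UNIV. \<bar>x $ i\<bar> powr p) powr (1 / p)"
  shows "Wbar N p (Gfam p kl \<beta> n) \<mu>
     \<le> ennreal (2 * C * real CARD('m) powr (1 / p) * \<beta>
          + 2 * C * (\<Sum>i\<in>UNIV. \<integral>t. (max 0 (kappa kl \<beta> i 0 - t)) powr p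
                     + (max 0 (t - kappa kl \<beta> i (n i))) powr p
                   \<partial>(distr \<mu> borel (\<lambda>x. x $ i))) powr (1 / p))"
proof -
  have pm: "prob_space \<mu>" and sm: "sets \<mu> = sets borel" using mu by (auto simp: Pp_def)
  have p0: "0 < p" using p by simp
  have compm: "(\<lambda>x. x $ i) \<in> measurable \<mu> borel" for i
    by (subst measurable_cong_sets[OF sm refl]) simp
  have RHS: "(\<Sum>i\<in>UNIV. \<integral>t. (max 0 (kappa kl \<beta> i 0 - t)) powr p
                     + (max 0 (t - kappa kl \<beta> i (n i))) powr p \<partial>(distr \<mu> borel (\<lambda>x. x $ i)))
      = (\<Sum>i\<in>UNIV. \<integral>x. dd i (x $ i) powr p \<partial>\<mu>)"
  proof (rule sum.cong[OF refl])
    fix i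
    have fm: "(\<lambda>t. (max 0 (kappa kl \<beta> i 0 - t)) powr p + (max 0 (t - kappa kl \<beta> i (n i))) powr p) \<in> borel_measurable borel"
      by measurable
    show "(\<integral>t. (max 0 (kappa kl \<beta> i 0 - t)) powr p + (max 0 (t - kappa kl \<beta> i (n i))) powr p \<partial>(distr \<mu> borel (\<lambda>x. x $ i)))
       = (\<integral>x. dd i (x $ i) powr p \<partial>\<mu>)"
      using integral_distr[OF compm fm] by (simp add: dd_powr[OF p0])
  qed
  have G0sub: "G0 kl \<beta> n \<subseteq> Gfam p kl \<beta> n" by (auto simp: Gfam_def)
  have main: "Wp N p \<mu> \<nu> \<le> 2 * C * real CARD('m) powr (1 / p) * \<beta>
          + 2 * C * (\<Sum>i\<in>UNIV. \<integral>x. dd i (x $ i) powr p \<partial>\<mu>) powr (1 / p)"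
    if nu: "\<nu> \<in> eq_class N p (Gfam p kl \<beta> n) \<mu>" for \<nu>
  proof -
    have pn: "prob_space \<nu>" and sn: "sets \<nu> = sets borel"
      and G: "\<And>g. g \<in> Gfam p kl \<beta> n \<Longrightarrow> g \<in> borel_measurable borel \<and> integrable \<nu> (\<lambda>x. \<bar>g x\<bar> powr p) \<and> (\<integral>x. g x \<partial>\<nu>) = (\<integral>x. g x \<partial>\<mu>)"
    proof -
      have a: "\<nu> \<in> PpG N p (Gfam p kl \<beta> n)" and b: "\<forall>g\<in>Gfam p kl \<beta> n. (\<integral>x. g x \<partial>\<nu>) = (\<integral>x. g x \<partial>\<mu>)"
        using nu unfolding eq_class_def by blast+
      have c: "\<nu> \<in> Pp N p" and d: "\<forall>g\<in>Gfam p kl \<beta> n. g \<in> borel_measurable borel \<and> integrable \<nu> (\<lambda>x. \<bar>g x\<bar> powr p)"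
        using a unfolding PpG_def by blast+
      show "prob_space \<nu>" "sets \<nu> = sets borel" using c unfolding Pp_def by blast+
      show "\<And>g. g \<in> Gfam p kl \<beta> n \<Longrightarrow> g \<in> borel_measurable borel \<and> integrable \<nu> (\<lambda>x. \<bar>g x\<bar> powr p) \<and> (\<integral>x. g x \<partial>\<nu>) = (\<integral>x. g x \<partial>\<mu>)"
        using b d by blast
    qed
    interpret PM: prob_space \<mu> by (rule pm)
    interpret PN: prob_space \<nu> by (rule pn)
    have Gi: "integrable \<nu> g" if "g \<in> Gfam p kl \<beta> n" for g
    proof -
      have g1: "g \<in> borel_measurable borel" and g2: "integrable \<nu> (\<lambda>x. \<bar>g x\<bar> powr p)"
        using G[OF that] by blast+
      show ?thesis by (rule from_powr[OF pn sn p g1 g2])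
    qed
    have G0facts: "integrable \<mu> g \<and> integrable \<nu> g \<and> (\<integral>x. g x \<partial>\<nu>) = (\<integral>x. g x \<partial>\<mu>)"
      if g: "g \<in> G0 kl \<beta> n" for g
    proof -
      obtain L j where gL: "g = gfun L j" using G0_eq[OF g] by blast
      have "integrable \<mu> g"
        unfolding gL by (rule mu_lin[OF nN p NC mu gfun_measurable gfun_bound])
      moreover have "g \<in> Gfam p kl \<beta> n" using g G0sub by blast
      ultimately show ?thesis using Gi G by blast
    qed
    have QM': "(\<integral>x. acell r x \<partial>\<nu>) = (\<integral>x. acell r x \<partial>\<mu>)" if "r \<in> grid" for r
      using q_equal[OF pm sm pn sn G0facts that] by simp
    have iM: "integrable \<mu> (\<lambda>x. dd i (x $ i) powr p)" for i by (rule dd_int_mu[OF nN p NC mu])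
    have ddfacts: "integrable \<nu> (\<lambda>x. dd i (x $ i) powr p) \<and> (\<integral>x. dd i (x $ i) powr p \<partial>\<nu>) = (\<integral>x. dd i (x $ i) powr p \<partial>\<mu>)" for i
    proof (cases "p = 1")
      case True
      define g1 where "g1 = gfun {i} (\<lambda>_. 0)"
      define g2 where "g2 = gfun {i} n"
      define k0 where "k0 = kappa kl \<beta> i 0"
      have g1G: "g1 \<in> G0 kl \<beta> n" "g2 \<in> G0 kl \<beta> n" unfolding g1_def g2_def by (auto intro!: gfun_G0)
      have xG: "(\<lambda>x. x $ i) \<in> Gfam p kl \<beta> n" using True by (auto simp: Gfam_def)
      have eq: "dd i (x $ i) powr p = g1 x - x $ i + k0 + g2 x" for x
        using True dd_nonneg[of i "x $ i"] by (simp add: g1_def g2_def gfun_single dd_def k0_def max_def)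
      have ixn: "integrable \<nu> (\<lambda>x. x $ i)" by (rule Gi[OF xG])
      have ixm: "integrable \<mu> (\<lambda>x. x $ i)" by (rule mu_coord(2)[OF nN p NC mu])
      have "integrable \<nu> (\<lambda>x. g1 x - x $ i + k0 + g2 x)" using G0facts[OF g1G(1)] G0facts[OF g1G(2)] ixn by auto
      moreover have "(\<integral>x. g1 x - x $ i + k0 + g2 x \<partial>\<nu>) = (\<integral>x. g1 x - x $ i + k0 + g2 x \<partial>\<mu>)"
        using G0facts[OF g1G(1)] G0facts[OF g1G(2)] ixn ixm G[OF xG]
        by (simp add: PM.prob_space PN.prob_space)
      ultimately show ?thesis by (simp add: eq)
    next
      case False
      define g1 where "g1 = (\<lambda>x::real^'m. (max 0 (kappa kl \<beta> i 0 - x $ i)) powr p)"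
      define g2 where "g2 = (\<lambda>x::real^'m. (max 0 (x $ i - kappa kl \<beta> i (n i))) powr p)"
      have gG: "g1 \<in> Gfam p kl \<beta> n" "g2 \<in> Gfam p kl \<beta> n" using False by (auto simp: Gfam_def g1_def g2_def)
      have eq: "dd i (x $ i) powr p = g1 x + g2 x" for x by (simp add: dd_powr[OF p0] g1_def g2_def)
      have [measurable_cong]: "sets \<mu> = sets borel" by (rule sm)
      have im: "integrable \<mu> g1 \<and> integrable \<mu> g2"
      proof
        show "integrable \<mu> g1"
          by (rule Bochner_Integration.integrable_bound[OF iM[of i]]) (auto simp: eq g2_def g1_def intro!: AE_I2)
        show "integrable \<mu> g2"
          by (rule Bochner_Integration.integrable_bound[OF iM[of i]]) (auto simp: eq g2_def g1_def intro!: AE_I2)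
      qed
      have "integrable \<nu> (\<lambda>x. g1 x + g2 x)" using Gi[OF gG(1)] Gi[OF gG(2)] by auto
      moreover have "(\<integral>x. g1 x + g2 x \<partial>\<nu>) = (\<integral>x. g1 x + g2 x \<partial>\<mu>)"
        using Gi[OF gG(1)] Gi[OF gG(2)] im G[OF gG(1)] G[OF gG(2)] by simp
      ultimately show ?thesis by (simp add: eq)
    qed
    have "Wp N p \<mu> \<nu> \<le> C * (2 * \<beta> * real CARD('m) powr (1 / p)
            + 2 * (\<Sum>i\<in>UNIV. \<integral>x. dd i (x $ i) powr p \<partial>\<mu>) powr (1 / p))"
      by (rule Wp_bound[OF nN p C NC pm sm pn sn QM' iM]) (use ddfacts in auto)
    then show ?thesis by (simp add: algebra_simps)
  qed
  show ?thesis
    unfolding Wbar_def RHS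
    by (rule SUP_least) (use main in \<open>auto intro: ennreal_leI\<close>)
qed

end

lemma tails_to_zero:
  fixes N :: "real^'m \<Rightarrow> real" and \<mu> :: "(real^'m) measure"
  assumes nN: "is_norm N" and p: "1 \<le> p" and mu: "\<mu> \<in> Pp N p"
    and NC: "\<forall>x. N x \<le> C * (\<Sum>i\<in>UNIV. \<bar>x $ i\<bar> powr p) powr (1 / p)"
  defines "s \<equiv> \<lambda>(i::'m) (k::nat) (x::real^'m). (max 0 (- real k - x $ i)) powr p + (max 0 (x $ i - real k)) powr p"
  shows "(\<lambda>k. \<Sum>i\<in>UNIV. \<integral>x. s i k x \<partial>\<mu>) \<longlonglongrightarrow> 0" and "\<And>i k. integrable \<mu> (s i k)"
proof -
  have pm: "prob_space \<mu>" and sm: "sets \<mu> = sets borel" using mu by (auto simp: Pp_def)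
  have [measurable_cong]: "sets \<mu> = sets borel" by (rule sm)
  have p0: "0 < p" using p by simp
  have sm': "s i k \<in> borel_measurable \<mu>" for i k unfolding s_def by measurable
  have wi: "integrable \<mu> (\<lambda>x. 2 * \<bar>x $ i\<bar> powr p)" for i using mu_coord(1)[OF nN p NC mu] by auto
  have lim: "AE x in \<mu>. (\<lambda>k. s i k x) \<longlonglongrightarrow> 0" for i
  proof (rule AE_I2)
    fix x :: "real^'m"
    show "(\<lambda>k. s i k x) \<longlonglongrightarrow> 0"
    proof (rule tendsto_eventually)
      obtain K :: nat where K: "\<bar>x $ i\<bar> < real K" using reals_Archimedean2 by blast
      show "\<forall>\<^sub>F k in sequentially. s i k x = 0"
        unfolding eventually_sequentially
      proof (intro exI allI impI)
        fix k assume "K \<le> k"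
        then have "\<bar>x $ i\<bar> < real k" using K by (meson of_nat_le_iff order_less_le_trans)
        then show "s i k x = 0" by (simp add: s_def)
      qed
    qed
  qed
  have bound: "AE x in \<mu>. norm (s i k x) \<le> 2 * \<bar>x $ i\<bar> powr p" for i k
  proof (rule AE_I2)
    fix x :: "real^'m"
    have "(max 0 (- real k - x $ i)) powr p \<le> \<bar>x $ i\<bar> powr p" using p0 by (intro powr_mono2) auto
    moreover have "(max 0 (x $ i - real k)) powr p \<le> \<bar>x $ i\<bar> powr p" using p0 by (intro powr_mono2) auto
    ultimately show "norm (s i k x) \<le> 2 * \<bar>x $ i\<bar> powr p" by (simp add: s_def)
  qed
  show "integrable \<mu> (s i k)" for i k
    by (rule integrable_dominated_convergence2[OF _ sm' wi lim bound]) simp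
  have "(\<lambda>k. \<integral>x. s i k x \<partial>\<mu>) \<longlonglongrightarrow> (\<integral>x. 0 \<partial>\<mu>)" for i
    by (rule integral_dominated_convergence[OF _ sm' wi lim bound]) simp
  then have "(\<lambda>k. \<Sum>i\<in>UNIV. \<integral>x. s i k x \<partial>\<mu>) \<longlonglongrightarrow> (\<Sum>i\<in>(UNIV::'m set). 0)"
    by (intro tendsto_sum) simp
  then show "(\<lambda>k. \<Sum>i\<in>UNIV. \<integral>x. s i k x \<partial>\<mu>) \<longlonglongrightarrow> 0" by simp
qed

context gridsetup begin
lemma rhs_eq:
  assumes sm: "sets \<mu> = sets borel" and p: "1 \<le> p"
  shows "(\<Sum>i\<in>UNIV. \<integral>t. (max 0 (kappa kl \<beta> i 0 - t)) powr p
                     + (max 0 (t - kappa kl \<beta> i (n i))) powr p \<partial>(distr \<mu> borel (\<lambda>x. x $ i)))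
      = (\<Sum>i\<in>UNIV. \<integral>x. dd i (x $ i) powr p \<partial>\<mu>)"
proof (rule sum.cong[OF refl])
  fix i
  have p0: "0 < p" using p by simp
  have compm: "(\<lambda>x. x $ i) \<in> measurable \<mu> borel"
    by (subst measurable_cong_sets[OF sm refl]) simp
  have fm: "(\<lambda>t. (max 0 (kappa kl \<beta> i 0 - t)) powr p + (max 0 (t - kappa kl \<beta> i (n i))) powr p) \<in> borel_measurable borel"
    by measurable
  show "(\<integral>t. (max 0 (kappa kl \<beta> i 0 - t)) powr p + (max 0 (t - kappa kl \<beta> i (n i))) powr p \<partial>(distr \<mu> borel (\<lambda>x. x $ i)))
     = (\<integral>x. dd i (x $ i) powr p \<partial>\<mu>)"
    using integral_distr[OF compm fm] by (simp add: dd_powr[OF p0])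
qed
end

theorem corollary3p15:
  fixes N :: "real^'m \<Rightarrow> real" and p C :: real and \<mu> :: "(real^'m) measure"
  assumes "is_norm N" and "1 \<le> p" and "\<mu> \<in> Pp N p" and "1 \<le> C"
    and "\<forall>x. N x \<le> C * (\<Sum>i\<in>UNIV. \<bar>x $ i\<bar> powr p) powr (1 / p)"
  shows "(\<forall>\<beta>>0. \<forall>(n :: 'm \<Rightarrow> nat) (kl :: 'm \<Rightarrow> real).
           Wbar N p (Gfam p kl \<beta> n) \<mu>
             \<le> ennreal (2 * C * real CARD('m) powr (1 / p) * \<beta>
               + 2 * C * (\<Sum>i\<in>UNIV. \<integral>t. (max 0 (kappa kl \<beta> i 0 - t)) powr p
                     + (max 0 (t - kappa kl \<beta> i (n i))) powr p
                   \<partial>(distr \<mu> borel (\<lambda>x. x $ i))) powr (1 / p)))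
       \<and> (\<forall>\<epsilon>>0. \<exists>\<beta>>0. \<exists>(n :: 'm \<Rightarrow> nat) (kl :: 'm \<Rightarrow> real).
           Wbar N p (Gfam p kl \<beta> n) \<mu> \<le> ennreal \<epsilon>)"
proof (intro conjI allI impI)
  note nN = assms(1) and p = assms(2) and mu = assms(3) and C = assms(4) and NC = assms(5)
  have sm: "sets \<mu> = sets borel" using mu by (auto simp: Pp_def)
  have p0: "0 < p" using p by simp
  show "Wbar N p (Gfam p kl \<beta> n) \<mu>
             \<le> ennreal (2 * C * real CARD('m) powr (1 / p) * \<beta>
               + 2 * C * (\<Sum>i\<in>UNIV. \<integral>t. (max 0 (kappa kl \<beta> i 0 - t)) powr p
                     + (max 0 (t - kappa kl \<beta> i (n i))) powr p
                   \<partial>(distr \<mu> borel (\<lambda>x. x $ i))) powr (1 / p))"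
    if "0 < \<beta>" for \<beta> and n :: "'m \<Rightarrow> nat" and kl :: "'m \<Rightarrow> real"
  proof -
    interpret gridsetup kl \<beta> n by unfold_locales (rule that)
    show ?thesis by (rule part1[OF nN p mu C NC])
  qed
  fix \<epsilon> :: real assume e: "0 < \<epsilon>"
  define s where "s \<equiv> \<lambda>(i::'m) (k::nat) (x::real^'m). (max 0 (- real k - x $ i)) powr p + (max 0 (x $ i - real k)) powr p"
  define S where "S k = (\<Sum>i\<in>UNIV. \<integral>x. s i k x \<partial>\<mu>)" for k
  have Slim: "S \<longlonglongrightarrow> 0" unfolding S_def s_def by (rule tails_to_zero(1)[OF nN p mu NC])
  have si: "integrable \<mu> (s i k)" for i k unfolding s_def by (rule tails_to_zero(2)[OF nN p mu NC])
  have S0: "0 \<le> S k" for k unfolding S_def s_def by (intro sum_nonneg integral_nonneg_AE) auto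
  have "(\<lambda>k. S k powr (1 / p)) \<longlonglongrightarrow> 0 powr (1 / p)"
    using Slim S0 p0 by (intro tendsto_intros) auto
  then have "(\<lambda>k. S k powr (1 / p)) \<longlonglongrightarrow> 0" by simp
  moreover have "0 < \<epsilon> / (4 * C)" using e C by simp
  ultimately have "\<forall>\<^sub>F k in sequentially. S k powr (1 / p) < \<epsilon> / (4 * C)"
    by (rule order_tendstoD(2))
  then obtain K where K: "S K powr (1 / p) < \<epsilon> / (4 * C)" unfolding eventually_sequentially by auto
  define m where "m = real CARD('m) powr (1 / p)"
  have m0: "0 < m" unfolding m_def by simp
  define \<beta> where "\<beta> = \<epsilon> / (4 * C * m)"
  have b0: "0 < \<beta>" unfolding \<beta>_def using e C m0 by simp
  define kl :: "'m \<Rightarrow> real" where "kl i = - real K" for i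
  define n :: "'m \<Rightarrow> nat" where "n i = nat \<lceil>2 * real K / \<beta>\<rceil>" for i
  interpret gridsetup kl \<beta> n by unfold_locales (rule b0)
  have k0: "kappa kl \<beta> i 0 = - real K" for i by (simp add: kappa_def kl_def)
  have kn: "real K \<le> kappa kl \<beta> i (n i)" for i
  proof -
    have "2 * real K / \<beta> \<le> real (n i)" unfolding n_def by linarith
    then have "2 * real K \<le> real (n i) * \<beta>" using b0 by (simp add: field_simps)
    then show ?thesis by (simp add: kappa_def kl_def)
  qed
  define T where "T = (\<Sum>i\<in>UNIV. \<integral>x. dd i (x $ i) powr p \<partial>\<mu>)"
  have TS: "T \<le> S K"
    unfolding T_def S_def
  proof (intro sum_mono integral_mono)
    fix i x
    have "max 0 (x $ i - kappa kl \<beta> i (n i)) \<le> max 0 (x $ i - real K)" using kn[of i] by simp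
    then have "(max 0 (x $ i - kappa kl \<beta> i (n i))) powr p \<le> (max 0 (x $ i - real K)) powr p"
      using p0 by (intro powr_mono2) auto
    then show "dd i (x $ i) powr p \<le> s i K x" by (simp add: dd_powr[OF p0] s_def k0)
  qed (use dd_int_mu[OF nN p NC mu] si in auto)
  have T0: "0 \<le> T" unfolding T_def by (intro sum_nonneg integral_nonneg_AE) auto
  have "T powr (1 / p) \<le> S K powr (1 / p)" using TS T0 p0 by (intro powr_mono2) auto
  then have TK: "2 * C * T powr (1 / p) < \<epsilon> / 2"
  proof -
    have "2 * C * T powr (1 / p) \<le> 2 * C * S K powr (1 / p)" using C \<open>T powr (1 / p) \<le> S K powr (1 / p)\<close> by simp
    also have "\<dots> < 2 * C * (\<epsilon> / (4 * C))" using K C by (intro mult_strict_left_mono) auto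
    also have "\<dots> = \<epsilon> / 2" using C by (simp add: field_simps)
    finally show ?thesis .
  qed
  have bb: "2 * C * m * \<beta> = \<epsilon> / 2" unfolding \<beta>_def using C m0 by (simp add: field_simps)
  have "Wbar N p (Gfam p kl \<beta> n) \<mu> \<le> ennreal (2 * C * m * \<beta> + 2 * C * T powr (1 / p))"
    using part1[OF nN p mu C NC] rhs_eq[OF sm p] by (simp add: m_def T_def)
  also have "\<dots> \<le> ennreal \<epsilon>" using TK bb by (intro ennreal_leI) linarith
  finally show "\<exists>\<beta>>0. \<exists>(n :: 'm \<Rightarrow> nat) (kl :: 'm \<Rightarrow> real). Wbar N p (Gfam p kl \<beta> n) \<mu> \<le> ennreal \<epsilon>"
    using b0 by blast
qed

end
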